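(* Let $\mathcal{L}_1$ be the set of lines of $\mathrm{PG}(3,q)$ that are the intersection of two distinct osculating planes of $\mathcal{C}$. Then every line of $\mathcal{L}_1$ is disjoint from $\mathcal{C}$, $\mathcal{L}_1$ is a single $G$-orbit, and every $\ell\in\mathcal{L}_1$ satisfies: if $q\equiv 5 \pmod 6$, then $OD_2(\ell)=[2,0,0,q-1,0]$ and $OD_0(\ell)=[0,2,q-1,0,0]$; if $q\equiv 1 \pmod 6$, then $OD_2(\ell)=[2,0,\tfrac{q-1}{3},0,\tfrac{2(q-1)}{3}]$ and $OD_0(\ell)=[0,2,q-1,0,0]$.
   Context: Let $q$ be a power of a prime $p$, with $p\neq 2$ and $p\neq 3$, and $\mathbb{F}_q$ the field of order $q$. In $\mathrm{PG}(3,q)$ with homogeneous coordinates $(Y_0,Y_1,Y_2,Y_3)$, the twisted cubic is $\mathcal{C}=\{P(t):t\in\mathbb{F}_q\}\cup\{P(\infty)\}$, where $P(t)=(1,t,t^2,t^3)$ and $P(\infty)=(0,0,0,1)$. $G\le \mathrm{PGL}(4,q)$ is the image of the homomorphism $\mathrm{PGL}(2,q)\to\mathrm{PGL}(4,q)$ sending the projectivity with matrix $\begin{pmatrix}a&b\\c&d\end{pmatrix}$ to the projectivity with matrix $\begin{pmatrix} a^3&a^2b&ab^2&b^3\\ 3a^2c&a^2d+2abc&b^2c+2abd&3b^2d\\ 3ac^2&bc^2+2acd&ad^2+2bcd&3bd^2\\ c^3&c^2d&cd^2&d^3\end{pmatrix}$; $G\cong\mathrm{PGL}(2,q)$ stabilises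 $\mathcal{C}$. The osculating plane at $P(t)$ is $\Pi(t):\,-t^3Y_0+3t^2Y_1-3tY_2+Y_3=0$ for $t\in\mathbb{F}_q$, and $\Pi(\infty): Y_0=0$; there are $q+1$ osculating planes. The tangent line at $P(t)$ is the unique line through $P(t)$ meeting $\mathcal{C}$ with multiplicity two (e.g. the tangent at $P(0)$ is $Y_2=Y_3=0$, at $P(\infty)$ is $Y_0=Y_1=0$). Point classes ($G$-orbits on points): $\mathcal{P}_1$ = points of $\mathcal{C}$; $\mathcal{P}_2$ = points not on $\mathcal{C}$ lying on a tangent line of $\mathcal{C}$; $\mathcal{P}_3$ = points not on $\mathcal{C}$ lying on exactly three osculating planes; $\mathcal{P}_4$ = points not on $\mathcal{C}$ lying on exactly one osculating plane; $\mathcal{P}_5$ = points on no osculating plane. Plane classes ($G$-orbits on planes): $\mathcal{H}_1$ = osculating planes; $\mathcal{H}_2$ = planes meeting $\mathcal{C}$ in exactly two points; $\mathcal{H}_3$ = planes meeting $\mathcal{C}$ in exactly three points; $\mathcal{H}_4$ = non-osculating planes meeting $\mathcal{C}$ in exactly one point; $\mathcal{H}_5$ = planes disjoint from $\mathcal{C}$. For a line $\ell$, the point orbit distribution is $OD_0(\ell)=[a_0,b_0,c_0,d_0,e_0]$ where these are the numbers of points of $\ell$ in $\mathcal{P}_1,\dots,\mathcal{P}_5$ respectively; the plane orbit distribution is $OD_2(\ell)=[a_2,\dots,e_2]$, the numbers of planes through $\ell$ in $\mathcal{H}_1,\dots,\mathcal{H}_5$ respectively. *)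

theory Defs
  imports Main
begin

text \<open>Homogeneous coordinates (Y0,Y1,Y2,Y3) of PG(3,q) over a finite field 'a.
  A point is the set of all nonzero scalar multiples of a nonzero vector; a plane is
  the set of points annihilated by a nonzero dual vector; a line is the intersection
  of two distinct planes.\<close>

type_synonym 'a v4 = "'a \<times> 'a \<times> 'a \<times> 'a"

definition zero4 :: "'a::field v4" where
  "zero4 = (0,0,0,0)"

definition sc :: "'a::field \<Rightarrow> 'a v4 \<Rightarrow> 'a v4" where
  "sc c v = (case v of (x0,x1,x2,x3) \<Rightarrow> (c*x0, c*x1, c*x2, c*x3))"

definition vadd :: "'a::field v4 \<Rightarrow> 'a v4 \<Rightarrow> 'a v4" where
  "vadd v w = (case v of (x0,x1,x2,x3) \<Rightarrow> case w of (y0,y1,y2,y3) \<Rightarrow>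
      (x0+y0, x1+y1, x2+y2, x3+y3))"

definition dot4 :: "'a::field v4 \<Rightarrow> 'a v4 \<Rightarrow> 'a" where
  "dot4 u v = (case u of (u0,u1,u2,u3) \<Rightarrow> case v of (x0,x1,x2,x3) \<Rightarrow>
      u0*x0 + u1*x1 + u2*x2 + u3*x3)"

definition pt :: "'a::field v4 \<Rightarrow> 'a v4 set" where
  "pt v = {sc c v | c. c \<noteq> 0}"

definition points :: "'a::field v4 set set" where
  "points = {pt v | v. v \<noteq> zero4}"

definition plane :: "'a::field v4 \<Rightarrow> 'a v4 set set" where
  "plane u = {P \<in> points. \<forall>v\<in>P. dot4 u v = 0}"

definition planes :: "'a::field v4 set set set" where
  "planes = {plane u | u. u \<noteq> zero4}"

definition lines :: "'a::field v4 set set set" where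
  "lines = {H \<inter> K | H K. H \<in> planes \<and> K \<in> planes \<and> H \<noteq> K}"

definition join :: "'a::field v4 \<Rightarrow> 'a v4 \<Rightarrow> 'a v4 set set" where
  "join v w = {pt (vadd (sc a v) (sc b w)) | a b. (a, b) \<noteq> (0, 0)}"

definition Pc :: "'a::field \<Rightarrow> 'a v4 set" where
  "Pc t = pt (1, t, t^2, t^3)"

definition Pinf :: "'a::field v4 set" where
  "Pinf = pt (0, 0, 0, 1)"

definition curve :: "'a::field v4 set set" where
  "curve = range Pc \<union> {Pinf}"

definition osc :: "'a::field \<Rightarrow> 'a v4 set set" where
  "osc t = plane (- (t^3), 3 * t^2, - (3 * t), 1)"

definition osc_inf :: "'a::field v4 set set" where
  "osc_inf = plane (1, 0, 0, 0)"

definition osc_planes :: "'a::field v4 set set set" where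
  "osc_planes = range osc \<union> {osc_inf}"

text \<open>Tangent lines: the line through P(t) and the derivative point (0,1,2t,3t^2);
  at infinity the line Y0 = Y1 = 0.\<close>
definition tangent :: "'a::field \<Rightarrow> 'a v4 set set" where
  "tangent t = join (1, t, t^2, t^3) (0, 1, 2 * t, 3 * t^2)"

definition tangent_inf :: "'a::field v4 set set" where
  "tangent_inf = join (0, 0, 0, 1) (0, 0, 1, 0)"

definition tangents :: "'a::field v4 set set set" where
  "tangents = range tangent \<union> {tangent_inf}"

definition n_osc :: "'a::field v4 set \<Rightarrow> nat" where
  "n_osc P = card {H \<in> osc_planes. P \<in> H}"

definition PC1 :: "'a::field v4 set set" where "PC1 = curve"
definition PC2 :: "'a::field v4 set set" where
  "PC2 = {P \<in> points. P \<notin> curve \<and> (\<exists>L\<in>tangents. P \<in> L)}"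
definition PC3 :: "'a::field v4 set set" where
  "PC3 = {P \<in> points. P \<notin> curve \<and> n_osc P = 3}"
definition PC4 :: "'a::field v4 set set" where
  "PC4 = {P \<in> points. P \<notin> curve \<and> n_osc P = 1}"
definition PC5 :: "'a::field v4 set set" where
  "PC5 = {P \<in> points. n_osc P = 0}"

definition HC1 :: "'a::field v4 set set set" where "HC1 = osc_planes"
definition HC2 :: "'a::field v4 set set set" where
  "HC2 = {H \<in> planes. card (H \<inter> curve) = 2}"
definition HC3 :: "'a::field v4 set set set" where
  "HC3 = {H \<in> planes. card (H \<inter> curve) = 3}"
definition HC4 :: "'a::field v4 set set set" where
  "HC4 = {H \<in> planes. H \<notin> osc_planes \<and> card (H \<inter> curve) = 1}"
definition HC5 :: "'a::field v4 set set set" where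
  "HC5 = {H \<in> planes. H \<inter> curve = {}}"

definition OD0 :: "'a::field v4 set set \<Rightarrow> nat list" where
  "OD0 l = map (\<lambda>C. card (l \<inter> C)) [PC1, PC2, PC3, PC4, PC5]"

definition OD2 :: "'a::field v4 set set \<Rightarrow> nat list" where
  "OD2 l = map (\<lambda>C. card {H \<in> C. l \<subseteq> H}) [HC1, HC2, HC3, HC4, HC5]"

text \<open>The group G: the 4x4 matrix M(a,b,c,d) acting on row vectors, Y \<mapsto> Y M
  (this is the action which maps P(t) to P((b+dt)/(a+ct))).\<close>
definition gmap :: "'a::field \<Rightarrow> 'a \<Rightarrow> 'a \<Rightarrow> 'a \<Rightarrow> 'a v4 \<Rightarrow> 'a v4" where
  "gmap a b c d y = (case y of (y0,y1,y2,y3) \<Rightarrow>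
     ( y0 * a^3 + y1 * (3*a^2*c) + y2 * (3*a*c^2) + y3 * c^3,
       y0 * (a^2*b) + y1 * (a^2*d + 2*a*b*c) + y2 * (b*c^2 + 2*a*c*d) + y3 * (c^2*d),
       y0 * (a*b^2) + y1 * (b^2*c + 2*a*b*d) + y2 * (a*d^2 + 2*b*c*d) + y3 * (c*d^2),
       y0 * b^3 + y1 * (3*b^2*d) + y2 * (3*b*d^2) + y3 * d^3))"

definition Gmaps :: "('a::field v4 \<Rightarrow> 'a v4) set" where
  "Gmaps = {gmap a b c d | a b c d. a * d - b * c \<noteq> 0}"

definition line_act :: "('a::field v4 \<Rightarrow> 'a v4) \<Rightarrow> 'a v4 set set \<Rightarrow> 'a v4 set set" where
  "line_act g l = (\<lambda>P. g ` P) ` l"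

definition L1 :: "'a::field v4 set set set" where
  "L1 = {l \<in> lines. \<exists>H K. H \<in> osc_planes \<and> K \<in> osc_planes \<and> H \<noteq> K \<and> l = H \<inter> K}"

end

theory Submission
  imports Defs "HOL-Computational_Algebra.Polynomial"
begin


definition cv :: "'a::field \<Rightarrow> 'a \<Rightarrow> 'a v4" where
  "cv s0 s1 = (s0^3, s0^2*s1, s0*s1^2, s1^3)"
definition ov :: "'a::field \<Rightarrow> 'a \<Rightarrow> 'a v4" where
  "ov t0 t1 = (-(t1^3), 3*t0*t1^2, -(3*t0^2*t1), t0^3)"
definition dv0 :: "'a::field \<Rightarrow> 'a \<Rightarrow> 'a v4" where
  "dv0 s0 s1 = (3*s0^2, 2*s0*s1, s1^2, 0)"
definition dv1 :: "'a::field \<Rightarrow> 'a \<Rightarrow> 'a v4" where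
  "dv1 s0 s1 = (0, s0^2, 2*s0*s1, 3*s1^2)"

lemma gmap_cv: "gmap a b c d (cv s0 s1) = cv (a*s0+c*s1) (b*s0+d*s1)"
  unfolding gmap_def cv_def by (simp; algebra)



lemma gmap_dv0: "gmap a b c d (dv0 s0 s1) = vadd (sc a (dv0 (a*s0+c*s1) (b*s0+d*s1))) (sc b (dv1 (a*s0+c*s1) (b*s0+d*s1)))"
  unfolding gmap_def dv0_def dv1_def sc_def vadd_def by (simp; algebra)
lemma gmap_dv1: "gmap a b c d (dv1 s0 s1) = vadd (sc c (dv0 (a*s0+c*s1) (b*s0+d*s1))) (sc d (dv1 (a*s0+c*s1) (b*s0+d*s1)))"
  unfolding gmap_def dv0_def dv1_def sc_def vadd_def by (simp; algebra)

lemma gmap_inv0: "gmap d (-b) (-c) a (gmap a b c d (y0,y1,y2,y3)) = sc ((a*d-b*c)^3) (y0,y1,y2,y3)"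
  apply (simp add: gmap_def sc_def)
  apply (intro conjI)
  apply algebra+
  done
lemma gmap_inv: "gmap d (-b) (-c) a (gmap a b c d v) = sc ((a*d-b*c)^3) v"
  by (cases v rule: prod_cases4) (simp only: gmap_inv0)
lemma dot_ov_gmap0: "dot4 (ov t0 t1) (gmap a b c d (y0,y1,y2,y3)) = dot4 (ov (d*t0 - c*t1) (a*t1 - b*t0)) (y0,y1,y2,y3)"
  apply (simp add: gmap_def ov_def dot4_def)
  apply algebra
  done
lemma dot_ov_gmap: "dot4 (ov t0 t1) (gmap a b c d v) = dot4 (ov (d*t0 - c*t1) (a*t1 - b*t0)) v"
  by (cases v rule: prod_cases4) (simp only: dot_ov_gmap0)


lemma sc_tuple: "sc c (x0,x1,x2,x3) = (c*x0,c*x1,c*x2,c*x3)" by (simp add: sc_def)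
lemma vadd_tuple: "vadd (x0,x1,x2,x3) (y0,y1,y2,y3) = (x0+y0,x1+y1,x2+y2,x3+y3)" by (simp add: vadd_def)
lemma dot_tuple: "dot4 (u0,u1,u2,u3) (x0,x1,x2,x3) = u0*x0+u1*x1+u2*x2+u3*x3" by (simp add: dot4_def)
lemma zero4_tuple: "zero4 = (0,0,0,0)" by (simp add: zero4_def)
lemmas tup = sc_tuple vadd_tuple dot_tuple zero4_tuple

lemma sc_sc: "sc a (sc b v) = sc (a*b) (v::'a::field v4)"
  by (cases v rule: prod_cases4) (simp add: tup mult.assoc)
lemma sc_one[simp]: "sc 1 (v::'a::field v4) = v"
  by (cases v rule: prod_cases4) (simp add: tup)
lemma sc_zero_left[simp]: "sc 0 (v::'a::field v4) = zero4"
  by (cases v rule: prod_cases4) (simp add: sc_tuple zero4_tuple)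
lemma sc_eq0: "sc c (v::'a::field v4) = zero4 \<longleftrightarrow> c = 0 \<or> v = zero4"
  by (cases v rule: prod_cases4) (auto simp add: sc_tuple zero4_tuple)
lemma dot_sc_right: "dot4 u (sc c v) = c * dot4 u (v::'a::field v4)"
  by (cases v rule: prod_cases4; cases u rule: prod_cases4) (simp add: tup algebra_simps)
lemma dot_sc_left: "dot4 (sc c u) v = c * dot4 u (v::'a::field v4)"
  by (cases v rule: prod_cases4; cases u rule: prod_cases4) (simp add: tup algebra_simps)

lemma pt_self: "v \<in> pt v"
  unfolding pt_def by (rule CollectI, rule exI[of _ 1]) simp
lemma pt_sc: "c \<noteq> 0 \<Longrightarrow> pt (sc c v) = pt (v::'a::field v4)"
proof -
  assume c: "c \<noteq> 0"
  have 1: "sc d (sc c v) \<in> pt v" if "d \<noteq> 0" for d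
    unfolding pt_def using that c by (auto simp: sc_sc)
  have 2: "sc d v \<in> pt (sc c v)" if "d \<noteq> 0" for d
    unfolding pt_def using that c by (intro CollectI exI[of _ "d/c"]) (simp add: sc_sc)
  show ?thesis using 1 2 unfolding pt_def[of "sc c v"] pt_def[of v] by blast
qed
lemma pt_memE: "w \<in> pt v \<Longrightarrow> (\<And>c. c \<noteq> 0 \<Longrightarrow> w = sc c v \<Longrightarrow> thesis) \<Longrightarrow> thesis"
  unfolding pt_def by blast
lemma pt_eq_iff: "pt v = pt w \<longleftrightarrow> (\<exists>c. c\<noteq>0 \<and> w = sc c (v::'a::field v4))"
proof
  assume "pt v = pt w"
  then have "w \<in> pt v" using pt_self by metis
  then show "\<exists>c. c\<noteq>0 \<and> w = sc c v" by (auto elim: pt_memE)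
next
  assume "\<exists>c. c\<noteq>0 \<and> w = sc c v" then show "pt v = pt w" using pt_sc by metis
qed
lemma pt_in_points: "v \<noteq> zero4 \<Longrightarrow> pt v \<in> points" unfolding points_def by blast
lemma pointsE: "P \<in> points \<Longrightarrow> (\<And>v. v \<noteq> zero4 \<Longrightarrow> P = pt v \<Longrightarrow> thesis) \<Longrightarrow> thesis"
  unfolding points_def by blast
lemma pt_in_plane: "v \<noteq> zero4 \<Longrightarrow> pt v \<in> plane u \<longleftrightarrow> dot4 u v = 0"
proof -
  assume v: "v \<noteq> zero4"
  have "(\<forall>w\<in>pt v. dot4 u w = 0) \<longleftrightarrow> dot4 u v = 0"
  proof
    assume "\<forall>w\<in>pt v. dot4 u w = 0" then show "dot4 u v = 0" using pt_self by blast
  next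
    assume "dot4 u v = 0" then show "\<forall>w\<in>pt v. dot4 u w = 0" by (auto elim!: pt_memE simp: dot_sc_right)
  qed
  then show ?thesis unfolding plane_def using pt_in_points[OF v] by auto
qed
lemma plane_sub: "plane u \<subseteq> points" unfolding plane_def by auto
lemma plane_sc: "c \<noteq> 0 \<Longrightarrow> plane (sc c u) = plane (u::'a::field v4)"
  unfolding plane_def by (auto simp: dot_sc_left)
lemma in_planeI: "P \<in> points \<Longrightarrow> (\<And>v. v \<noteq> zero4 \<Longrightarrow> P = pt v \<Longrightarrow> dot4 u v = 0) \<Longrightarrow> P \<in> plane u"
  by (metis pointsE pt_in_plane)

definition lin :: "('a::field v4 \<Rightarrow> 'a v4) \<Rightarrow> bool" where
 "lin g \<longleftrightarrow> (\<forall>c v. g (sc c v) = sc c (g v)) \<and> (\<forall>v w. g (vadd v w) = vadd (g v) (g w))"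

definition tr :: "('a::field v4 \<Rightarrow> 'a v4) \<Rightarrow> 'a v4 \<Rightarrow> 'a v4" where
 "tr g u = (dot4 u (g (1,0,0,0)), dot4 u (g (0,1,0,0)), dot4 u (g (0,0,1,0)), dot4 u (g (0,0,0,1)))"

lemma lin_sc: "lin g \<Longrightarrow> g (sc c v) = sc c (g v)" unfolding lin_def by blast
lemma lin_img_pt: "lin g \<Longrightarrow> g ` pt v = pt (g v)"
  unfolding pt_def by (force simp: lin_sc)

lemma dot_zero: "dot4 zero4 v = (0::'a::field)"
  by (cases v rule: prod_cases4) (simp add: tup)

lemma dot_vadd: "dot4 u (vadd v w) = dot4 u v + dot4 u (w::'a::field v4)"
  by (cases v rule: prod_cases4; cases u rule: prod_cases4; cases w rule: prod_cases4) (simp add: tup algebra_simps)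

lemma tr_dot: assumes "lin g" shows "dot4 (tr g u) v = dot4 u (g v)"
proof (cases v rule: prod_cases4)
  case (fields v0 v1 v2 v3)
  have e: "v = vadd (vadd (vadd (sc v0 (1,0,0,0)) (sc v1 (0,1,0,0))) (sc v2 (0,0,1,0))) (sc v3 (0,0,0,1))"
    using fields by (simp add: tup)
  have "g v = vadd (vadd (vadd (sc v0 (g (1,0,0,0))) (sc v1 (g (0,1,0,0)))) (sc v2 (g (0,0,1,0)))) (sc v3 (g (0,0,0,1)))"
    using assms unfolding lin_def by (subst e) (simp only: sc_one)
  then show ?thesis using fields by (simp add: tr_def dot_vadd dot_sc_right tup algebra_simps)
qed

locale ipair =
  fixes g h :: "'a::field v4 \<Rightarrow> 'a v4" and k :: 'a
  assumes lg: "lin g" and lh: "lin h" and knz: "k \<noteq> 0"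
    and hg: "\<And>v. h (g v) = sc k v" and gh: "\<And>v. g (h v) = sc k v"
begin

lemma sym: "ipair h g k" using lg lh knz hg gh by unfold_locales auto

lemma g_sc: "g (sc c v) = sc c (g v)" using lg unfolding lin_def by blast
lemma h_sc: "h (sc c v) = sc c (h v)" using lh unfolding lin_def by blast
lemma g_zero: "g zero4 = zero4" using g_sc[of 0 zero4] by simp
lemma h_zero: "h zero4 = zero4" using h_sc[of 0 zero4] by simp
lemma g_nz: "v \<noteq> zero4 \<Longrightarrow> g v \<noteq> zero4"
  using hg[of v] h_zero knz sc_eq0 by metis

lemma img_pt: "g ` pt v = pt (g v)" using lin_img_pt[OF lg] .
lemma img_points: "P \<in> points \<Longrightarrow> g ` P \<in> points"
  by (auto elim!: pointsE simp: img_pt g_nz pt_in_points)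
lemma hg_pt: "P \<in> points \<Longrightarrow> h ` (g ` P) = P"
proof (erule pointsE)
  fix v assume "v \<noteq> zero4" "P = pt v"
  have "h ` pt (g v) = pt (h (g v))" using lin_img_pt[OF lh] .
  then show "h ` (g ` P) = P" using \<open>P = pt v\<close> img_pt hg knz pt_sc by metis
qed
lemma inj_pts: "inj_on ((`) g) points"
  by (metis hg_pt inj_onI)

lemma pull: "P \<in> points \<Longrightarrow> g ` P \<in> plane u \<longleftrightarrow> P \<in> plane (tr g u)"
  by (auto elim!: pointsE simp: img_pt g_nz pt_in_plane tr_dot[OF lg])

lemma tr_nz: assumes "u \<noteq> zero4" shows "tr g u \<noteq> zero4"
proof
  assume "tr g u = zero4"
  then have "\<And>w. dot4 u (g (h w)) = 0" using tr_dot[OF lg, of u] by (metis dot_zero)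
  then have z: "\<And>w. dot4 u w = 0" using knz by (simp add: gh dot_sc_right)
  have "dot4 u (1,0,0,0) = 0" "dot4 u (0,1,0,0) = 0" "dot4 u (0,0,1,0) = 0" "dot4 u (0,0,0,1) = 0"
    by (rule z)+
  then show False using assms by (cases u rule: prod_cases4) (simp add: tup)
qed

lemma la_def': "line_act g S = (`) g ` S" unfolding line_act_def by simp

lemma img_plane: "line_act g (plane u) = plane (tr h u)"
proof
  show "line_act g (plane u) \<subseteq> plane (tr h u)"
  proof
    fix Q assume "Q \<in> line_act g (plane u)"
    then obtain P where P: "P \<in> plane u" "Q = g ` P" unfolding line_act_def by blast
    have Pp: "P \<in> points" using P(1) plane_sub by blast
    have Qp: "Q \<in> points" using P(2) img_points[OF Pp] by simp
    have "h ` Q = P" using P(2) hg_pt[OF Pp] by simp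
    then have "h ` Q \<in> plane u" using P(1) by simp
    then show "Q \<in> plane (tr h u)" using ipair.pull[OF sym Qp, of u] by simp
  qed
next
  show "plane (tr h u) \<subseteq> line_act g (plane u)"
  proof
    fix Q assume Q: "Q \<in> plane (tr h u)"
    have Qp: "Q \<in> points" using Q plane_sub by blast
    have 1: "h ` Q \<in> plane u" using ipair.pull[OF sym Qp, of u] Q by simp
    have 2: "Q = g ` (h ` Q)" using ipair.hg_pt[OF sym Qp] by simp
    show "Q \<in> line_act g (plane u)" unfolding line_act_def by (rule image_eqI[where f="(`) g", OF 2 1])
  qed
qed

lemma la_inv: "S \<subseteq> points \<Longrightarrow> line_act h (line_act g S) = S"
proof -
  assume S: "S \<subseteq> points"
  have "line_act h (line_act g S) = (\<lambda>P. h ` (g ` P)) ` S" unfolding line_act_def by (rule image_image)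
  also have "\<dots> = (\<lambda>P. P) ` S" using S hg_pt by (intro image_cong[OF refl]) (simp add: subset_iff)
  finally show ?thesis by simp
qed

lemma la_inj: "inj_on (line_act g) (Pow points)"
proof (rule inj_onI)
  fix S T assume S: "S \<in> Pow points" and T: "T \<in> Pow points" and e: "line_act g S = line_act g T"
  have "S = line_act h (line_act g S)" using la_inv S by simp
  also have "\<dots> = line_act h (line_act g T)" using e by simp
  also have "\<dots> = T" using la_inv T by simp
  finally show "S = T" .
qed

lemma la_points: "S \<subseteq> points \<Longrightarrow> line_act g S \<subseteq> points"
  unfolding line_act_def using img_points by auto

lemma la_inter: "S \<subseteq> points \<Longrightarrow> T \<subseteq> points \<Longrightarrow> line_act g (S \<inter> T) = line_act g S \<inter> line_act g T"
  unfolding line_act_def by (rule inj_on_image_Int[OF inj_pts])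

lemma mem_la: assumes "P \<in> points" "S \<subseteq> points" shows "g ` P \<in> line_act g S \<longleftrightarrow> P \<in> S"
  unfolding line_act_def using inj_on_image_mem_iff[OF inj_pts assms] .

lemma sub_la: "S \<subseteq> points \<Longrightarrow> T \<subseteq> points \<Longrightarrow> line_act g S \<subseteq> line_act g T \<longleftrightarrow> S \<subseteq> T"
proof
  assume S: "S \<subseteq> points" and T: "T \<subseteq> points" and "line_act g S \<subseteq> line_act g T"
  then have "line_act h (line_act g S) \<subseteq> line_act h (line_act g T)" unfolding line_act_def by auto
  then show "S \<subseteq> T" using la_inv S T by simp
qed (auto simp: line_act_def)

lemma pclass_card:
  assumes C: "C \<subseteq> points" and cg: "\<And>P. P \<in> C \<Longrightarrow> g ` P \<in> C" and ch: "\<And>P. P \<in> C \<Longrightarrow> h ` P \<in> C"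
    and l: "l \<subseteq> points"
  shows "card (line_act g l \<inter> C) = card (l \<inter> C)"
proof -
  have "line_act g l \<inter> C = line_act g (l \<inter> C)"
  proof
    show "line_act g l \<inter> C \<subseteq> line_act g (l \<inter> C)"
    proof
      fix Q assume "Q \<in> line_act g l \<inter> C"
      then obtain P where P: "P \<in> l" "Q = g ` P" "Q \<in> C" unfolding line_act_def by auto
      have "h ` Q = P" using hg_pt P l by auto
      moreover have "h ` Q \<in> C" using ch P(3) by blast
      ultimately have "P \<in> C" by simp
      then show "Q \<in> line_act g (l \<inter> C)" using P unfolding line_act_def by auto
    qed
  qed (auto simp: line_act_def cg)
  moreover have "inj_on ((`) g) (l \<inter> C)" by (rule inj_on_subset[OF inj_pts]) (use l in blast)
  ultimately show ?thesis unfolding line_act_def by (simp add: card_image)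
qed

lemma hclass_card:
  assumes D: "D \<subseteq> Pow points" and dg: "\<And>H. H \<in> D \<Longrightarrow> line_act g H \<in> D"
    and dh: "\<And>H. H \<in> D \<Longrightarrow> line_act h H \<in> D"
    and l: "l \<subseteq> points"
  shows "card {H \<in> D. line_act g l \<subseteq> H} = card {H \<in> D. l \<subseteq> H}"
proof -
  have "{H \<in> D. line_act g l \<subseteq> H} = line_act g ` {H \<in> D. l \<subseteq> H}"
  proof
    show "{H \<in> D. line_act g l \<subseteq> H} \<subseteq> line_act g ` {H \<in> D. l \<subseteq> H}"
    proof
      fix H' assume H': "H' \<in> {H \<in> D. line_act g l \<subseteq> H}"
      have Hp: "H' \<subseteq> points" using H' D by auto
      have e: "line_act g (line_act h H') = H'" using ipair.la_inv[OF sym Hp] .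
      have "line_act g l \<subseteq> line_act g (line_act h H')" using H' e by simp
      then have "l \<subseteq> line_act h H'" using sub_la[OF l ipair.la_points[OF sym Hp]] by simp
      then show "H' \<in> line_act g ` {H \<in> D. l \<subseteq> H}" using e dh H' by force
    qed
  next
    show "line_act g ` {H \<in> D. l \<subseteq> H} \<subseteq> {H \<in> D. line_act g l \<subseteq> H}"
      using dg unfolding line_act_def by auto
  qed
  moreover have "inj_on (line_act g) {H \<in> D. l \<subseteq> H}" by (rule inj_on_subset[OF la_inj]) (use D in blast)
  ultimately show ?thesis by (simp add: card_image)
qed

end

lemma gmap_lin: "lin (gmap a b c d)"
proof -
  have 1: "gmap a b c d (sc e v) = sc e (gmap a b c d v)" for e v
    by (cases v rule: prod_cases4) (simp add: gmap_def tup algebra_simps)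
  have 2: "gmap a b c d (vadd v w) = vadd (gmap a b c d v) (gmap a b c d w)" for v w
    by (cases v rule: prod_cases4; cases w rule: prod_cases4) (simp add: gmap_def tup algebra_simps)
  show ?thesis unfolding lin_def using 1 2 by blast
qed

lemma gmap_ipair: "a*d-b*c \<noteq> 0 \<Longrightarrow> ipair (gmap a b c d) (gmap d (-b) (-c) a) ((a*d-b*c)^3)"
  apply unfold_locales
  apply (rule gmap_lin)+
  apply simp
  apply (rule gmap_inv)
proof -
  fix v
  have e: "d*a - (-b)*(-c) = a*d-b*c" by (simp add: mult.commute)
  show "gmap a b c d (gmap d (-b) (-c) a v) = sc ((a*d-b*c)^3) v"
    using gmap_inv[where a=d and b="-b" and c="-c" and d=a and v=v] unfolding e minus_minus .
qed

lemma Gmaps_inv: "g \<in> Gmaps \<Longrightarrow> \<exists>h k. ipair g h k \<and> h \<in> Gmaps"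
proof -
  assume "g \<in> Gmaps"
  then obtain a b c d where g: "g = gmap a b c d" "a*d-b*c \<noteq> 0" unfolding Gmaps_def by blast
  have "d * a - (-b) * (-c) \<noteq> 0" using g by (simp add: mult.commute)
  then have "gmap d (-b) (-c) a \<in> Gmaps" unfolding Gmaps_def by blast
  with gmap_ipair[OF g(2)] g(1) show ?thesis by blast
qed


lemma cv_scale: "cv (k*s0) (k*s1) = sc (k^3) (cv s0 s1)"
  by (simp add: cv_def sc_tuple power_mult_distrib algebra_simps eval_nat_numeral)
lemma ov_scale: "ov (k*t0) (k*t1) = sc (k^3) (ov t0 t1)"
  by (simp add: ov_def sc_tuple power_mult_distrib algebra_simps eval_nat_numeral)
lemma dv0_scale: "dv0 (k*s0) (k*s1) = sc (k^2) (dv0 s0 s1)"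
  by (simp add: dv0_def sc_tuple power_mult_distrib algebra_simps eval_nat_numeral)
lemma dv1_scale: "dv1 (k*s0) (k*s1) = sc (k^2) (dv1 s0 s1)"
  by (simp add: dv1_def sc_tuple power_mult_distrib algebra_simps eval_nat_numeral)

lemma cv_nz: "(s0,s1) \<noteq> (0,0) \<Longrightarrow> cv s0 s1 \<noteq> zero4"
  by (auto simp: cv_def zero4_tuple)
lemma ov_nz: "(s0,s1) \<noteq> (0,0) \<Longrightarrow> ov s0 s1 \<noteq> zero4"
  by (auto simp: ov_def zero4_tuple)

lemma hom_cases:
  fixes s0 s1 :: "'a::field"
  assumes "(s0,s1) \<noteq> (0,0)"
  obtains k t where "k \<noteq> 0" "s0 = k" "s1 = k * t" | k where "k \<noteq> 0" "s0 = 0" "s1 = k"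
proof (cases "s0 = 0")
  case True then show ?thesis using assms that(2)[of s1] by auto
next
  case False then show ?thesis using that(1)[of s0 "s1/s0"] by simp
qed

lemma Pc_cv: "Pc t = pt (cv 1 t)" by (simp add: Pc_def cv_def)
lemma Pinf_cv: "Pinf = pt (cv 0 1)" by (simp add: Pinf_def cv_def)
lemma osc_ov: "osc t = plane (ov 1 t)" by (simp add: osc_def ov_def)
lemma osc_inf_ov: "osc_inf = plane (ov 0 (1::'a::field))"
proof -
  have "ov 0 (1::'a) = sc (-1) (1,0,0,0)" by (simp add: ov_def sc_tuple)
  then show ?thesis by (simp add: osc_inf_def plane_sc)
qed

lemma Pc_curve: "Pc t \<in> curve" and Pinf_curve: "Pinf \<in> curve" by (simp_all add: curve_def)
lemma osc_in: "osc t \<in> osc_planes" and osc_inf_in: "osc_inf \<in> osc_planes" by (simp_all add: osc_planes_def)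

lemma pt_cv_curve: "(s0,s1) \<noteq> (0,0) \<Longrightarrow> pt (cv s0 s1) \<in> curve"
proof (erule hom_cases)
  fix k t :: 'a assume k: "k \<noteq> 0" "s0 = k" "s1 = k*t"
  have "cv s0 s1 = sc (k^3) (cv 1 t)" using cv_scale[of k 1 t] k by simp
  then have "pt (cv s0 s1) = pt (cv 1 t)" using pt_sc[of "k^3" "cv 1 t"] k by simp
  then show ?thesis using Pc_curve[of t] unfolding Pc_cv by simp
next
  fix k :: 'a assume k: "k \<noteq> 0" "s0 = 0" "s1 = k"
  have "cv s0 s1 = sc (k^3) (cv 0 1)" using cv_scale[of k 0 1] k by simp
  then have "pt (cv s0 s1) = pt (cv 0 1)" using pt_sc[of "k^3" "cv 0 1"] k by simp
  then show ?thesis using Pinf_curve unfolding Pinf_cv by simp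
qed

lemma mem_cvset: "(s0,s1) \<noteq> (0,0) \<Longrightarrow> pt (cv s0 s1) \<in> {pt (cv s0 s1) | s0 s1. (s0,s1) \<noteq> (0,0)}"
  by blast
lemma mem_ovset: "(s0,s1) \<noteq> (0,0) \<Longrightarrow> plane (ov s0 s1) \<in> {plane (ov s0 s1) | s0 s1. (s0,s1) \<noteq> (0,0)}"
  by blast

lemma curve_hom: "curve = {pt (cv s0 s1) | s0 s1. (s0,s1) \<noteq> (0,0)}"
proof
  show "curve \<subseteq> {pt (cv s0 s1) | s0 s1. (s0,s1) \<noteq> (0,0)}"
  proof
    fix P assume "P \<in> curve"
    then consider t where "P = Pc t" | "P = Pinf" unfolding curve_def by blast
    then show "P \<in> {pt (cv s0 s1) | s0 s1. (s0,s1) \<noteq> (0,0)}"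
    proof cases
      case (1 t) then show ?thesis unfolding Pc_cv using mem_cvset[of 1 t] by simp
    next
      case 2 then show ?thesis unfolding Pinf_cv using mem_cvset[of 0 1] by simp
    qed
  qed
next
  show "{pt (cv s0 s1) | s0 s1. (s0,s1) \<noteq> (0,0)} \<subseteq> curve"
  proof
    fix P assume "P \<in> {pt (cv s0 s1) | s0 s1. (s0,s1) \<noteq> (0,0)}"
    then obtain s0 s1 where "P = pt (cv s0 s1)" "(s0,s1) \<noteq> (0,0)" by blast
    then show "P \<in> curve" using pt_cv_curve by simp
  qed
qed

lemma osc_plane_ov: "(t0,t1) \<noteq> (0,0) \<Longrightarrow> plane (ov t0 t1) \<in> osc_planes"
proof (erule hom_cases)
  fix k t :: 'a assume k: "k \<noteq> 0" "t0 = k" "t1 = k*t"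
  have "ov t0 t1 = sc (k^3) (ov 1 t)" using ov_scale[of k 1 t] k by simp
  then have "plane (ov t0 t1) = plane (ov 1 t)" using plane_sc[of "k^3" "ov 1 t"] k by simp
  then show ?thesis using osc_in[of t] unfolding osc_ov by simp
next
  fix k :: 'a assume k: "k \<noteq> 0" "t0 = 0" "t1 = k"
  have "ov t0 t1 = sc (k^3) (ov 0 1)" using ov_scale[of k 0 1] k by simp
  then have "plane (ov t0 t1) = plane (ov 0 1)" using plane_sc[of "k^3" "ov 0 1"] k by simp
  then show ?thesis using osc_inf_in unfolding osc_inf_ov by simp
qed

lemma osc_hom: "osc_planes = {plane (ov t0 t1) | t0 t1. (t0,t1) \<noteq> (0,0)}"
proof
  show "osc_planes \<subseteq> {plane (ov t0 t1) | t0 t1. (t0,t1) \<noteq> (0,0)}"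
  proof
    fix P assume "P \<in> osc_planes"
    then consider t where "P = osc t" | "P = osc_inf" unfolding osc_planes_def by blast
    then show "P \<in> {plane (ov t0 t1) | t0 t1. (t0,t1) \<noteq> (0,0)}"
    proof cases
      case (1 t) then show ?thesis unfolding osc_ov using mem_ovset[of 1 t] by simp
    next
      case 2 then show ?thesis unfolding osc_inf_ov using mem_ovset[of 0 1] by simp
    qed
  qed
next
  show "{plane (ov t0 t1) | t0 t1. (t0,t1) \<noteq> (0,0)} \<subseteq> osc_planes"
  proof
    fix P assume "P \<in> {plane (ov t0 t1) | t0 t1. (t0,t1) \<noteq> (0,0)}"
    then obtain s0 s1 where "P = plane (ov s0 s1)" "(s0,s1) \<noteq> (0,0)" by blast
    then show "P \<in> osc_planes" using osc_plane_ov by simp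
  qed
qed

lemma comb: "vadd (sc a (vadd (sc p x) (sc r y))) (sc b (vadd (sc s x) (sc u y)))
   = vadd (sc (a*p+b*s) x) (sc (a*r+b*u) (y::'a::field v4))"
  by (cases x rule: prod_cases4; cases y rule: prod_cases4) (simp add: tup algebra_simps)

lemma join_sub1:
  fixes p r s u :: "'a::field"
  assumes D: "p*u - r*s \<noteq> 0"
  shows "join (vadd (sc p x) (sc r y)) (vadd (sc s x) (sc u y)) \<subseteq> join x y"
proof
  fix P assume "P \<in> join (vadd (sc p x) (sc r y)) (vadd (sc s x) (sc u y))"
  then obtain a b where ab: "(a,b) \<noteq> (0,0)" "P = pt (vadd (sc a (vadd (sc p x) (sc r y))) (sc b (vadd (sc s x) (sc u y))))"
    unfolding join_def by blast
  have nz: "(a*p+b*s, a*r+b*u) \<noteq> (0,0)"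
  proof
    assume z: "(a*p+b*s, a*r+b*u) = (0,0)"
    then have "a*p+b*s = 0" "a*r+b*u = 0" by auto
    moreover have "a*(p*u - r*s) = u*(a*p+b*s) - s*(a*r+b*u)" "b*(p*u-r*s) = p*(a*r+b*u) - r*(a*p+b*s)"
      by (simp_all add: algebra_simps)
    ultimately have "a*(p*u - r*s) = 0" "b*(p*u-r*s) = 0" by simp_all
    then show False using D ab by simp
  qed
  show "P \<in> join x y" unfolding join_def using ab nz by (auto simp: comb)
qed

lemma vadd_sc0: "vadd v (sc 0 w) = v" "vadd (sc 0 w) v = (v::'a::field v4)"
   "vadd v zero4 = v" "vadd zero4 v = v"
  by (cases v rule: prod_cases4; cases w rule: prod_cases4; simp add: tup)+

lemma join_sub:
  fixes p r s u :: "'a::field"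
  assumes D: "p*u - r*s \<noteq> 0"
  shows "join (vadd (sc p x) (sc r y)) (vadd (sc s x) (sc u y)) = join x y"
proof
  show "join (vadd (sc p x) (sc r y)) (vadd (sc s x) (sc u y)) \<subseteq> join x y" by (rule join_sub1[OF D])
next
  define d where "d = p*u - r*s"
  define X where "X = vadd (sc p x) (sc r y)"
  define Y where "Y = vadd (sc s x) (sc u y)"
  have dnz: "d \<noteq> 0" using D d_def by simp
  have "(u/d)*p + (-r/d)*s = (p*u - r*s)/d" using dnz by (simp add: field_simps)
  then have c1: "(u/d)*p + (-r/d)*s = 1" using dnz d_def by simp
  have c2: "(u/d)*r + (-r/d)*u = 0" by (simp add: field_simps)
  have c3: "(-s/d)*p + (p/d)*s = 0" by (simp add: field_simps)
  have "(-s/d)*r + (p/d)*u = (p*u - r*s)/d" using dnz by (simp add: field_simps)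
  then have c4: "(-s/d)*r + (p/d)*u = 1" using dnz d_def by simp
  have ex: "x = vadd (sc (u/d) X) (sc (-r/d) Y)"
    unfolding X_def Y_def comb c1 c2 by (simp add: vadd_sc0)
  have ey: "y = vadd (sc (-s/d) X) (sc (p/d) Y)"
    unfolding X_def Y_def comb c3 c4 by (simp add: vadd_sc0)
  have "(u/d)*(p/d) - (-r/d)*(-s/d) = (p*u - r*s)/(d*d)" using dnz by (simp add: field_simps)
  also have "\<dots> = 1/d" using dnz unfolding d_def[symmetric] by (simp add: field_simps)
  finally have D2: "(u/d)*(p/d) - (-r/d)*(-s/d) \<noteq> 0" using dnz by simp
  show "join x y \<subseteq> join X Y" using join_sub1[OF D2, of X Y] ex ey by simp
qed

lemma join_scale: "c \<noteq> 0 \<Longrightarrow> join (sc c x) (sc c y) = join x (y::'a::field v4)"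
proof -
  assume c: "c \<noteq> 0"
  have "join (vadd (sc c x) (sc 0 y)) (vadd (sc 0 x) (sc c y)) = join x y" by (rule join_sub) (use c in simp)
  moreover have "vadd (sc c x) (sc 0 y) = sc c x" "vadd (sc 0 x) (sc c y) = sc c y"
    by (cases x rule: prod_cases4; cases y rule: prod_cases4; simp add: tup)+
  ultimately show ?thesis by simp
qed

lemma tangent_dv: assumes "(3::'a::field) \<noteq> 0" shows "tangent t = join (dv0 1 t) (dv1 1 (t::'a))"
proof -
  have e1: "cv 1 t = vadd (sc (1/3) (dv0 1 t)) (sc (t/3) (dv1 1 t))"
    using assms by (simp add: cv_def dv0_def dv1_def tup field_simps eval_nat_numeral)
  have e2: "dv1 1 t = vadd (sc 0 (dv0 1 t)) (sc 1 (dv1 1 t))"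
    by (simp add: dv0_def dv1_def tup)
  have "(1/3) * 1 - (t/3) * 0 \<noteq> (0::'a)" using assms by simp
  from join_sub[OF this, of "dv0 1 t" "dv1 1 t"]
  show ?thesis unfolding tangent_def using e1 e2 by (simp add: cv_def dv1_def)
qed

lemma tangent_inf_dv: assumes "(3::'a::field) \<noteq> 0" shows "tangent_inf = join (dv0 0 1) (dv1 0 (1::'a))"
proof -
  have e1: "(0,0,0,1) = vadd (sc 0 (dv0 0 1)) (sc (1/3) (dv1 0 (1::'a)))"
    using assms by (simp add: dv0_def dv1_def tup)
  have e2: "(0,0,1,0) = vadd (sc 1 (dv0 0 1)) (sc 0 (dv1 0 (1::'a)))"
    by (simp add: dv0_def dv1_def tup)
  have "0 * 0 - (1/3) * 1 \<noteq> (0::'a)" using assms by simp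
  from join_sub[OF this, of "dv0 0 1" "dv1 0 1"]
  show ?thesis unfolding tangent_inf_def using e1 e2 by simp
qed

lemma tangent_in: "tangent t \<in> tangents" and tangent_inf_in: "tangent_inf \<in> tangents"
  by (simp_all add: tangents_def)

lemma mem_tset: "(s0,s1) \<noteq> (0,0) \<Longrightarrow> join (dv0 s0 s1) (dv1 s0 s1) \<in> {join (dv0 s0 s1) (dv1 s0 s1) | s0 s1. (s0,s1) \<noteq> (0,0)}"
  by blast

lemma tan_join: assumes three: "(3::'a::field) \<noteq> 0" and "(s0,s1) \<noteq> (0,0)"
  shows "join (dv0 s0 s1) (dv1 s0 (s1::'a)) \<in> tangents"
  using assms(2)
proof (elim hom_cases)
  fix k t :: 'a assume k: "k \<noteq> 0" "s0 = k" "s1 = k*t"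
  have "join (dv0 s0 s1) (dv1 s0 s1) = join (sc (k^2) (dv0 1 t)) (sc (k^2) (dv1 1 t))"
    using dv0_scale[of k 1 t] dv1_scale[of k 1 t] k by simp
  also have "\<dots> = tangent t" using join_scale[of "k^2"] k tangent_dv[OF three] by simp
  finally show ?thesis using tangent_in by simp
next
  fix k :: 'a assume k: "k \<noteq> 0" "s0 = 0" "s1 = k"
  have "join (dv0 s0 s1) (dv1 s0 s1) = join (sc (k^2) (dv0 0 1)) (sc (k^2) (dv1 0 1))"
    using dv0_scale[of k 0 1] dv1_scale[of k 0 1] k by simp
  also have "\<dots> = tangent_inf" using join_scale[of "k^2"] k tangent_inf_dv[OF three] by simp
  finally show ?thesis using tangent_inf_in by simp
qed

lemma tangents_hom: assumes three: "(3::'a::field) \<noteq> 0"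
  shows "tangents = {join (dv0 s0 s1) (dv1 s0 (s1::'a)) | s0 s1. (s0,s1) \<noteq> (0,0)}"
proof
  show "tangents \<subseteq> {join (dv0 s0 s1) (dv1 s0 (s1::'a)) | s0 s1. (s0,s1) \<noteq> (0,0)}"
  proof
    fix L assume "L \<in> (tangents :: 'a v4 set set set)"
    then consider t where "L = tangent t" | "L = tangent_inf" unfolding tangents_def by blast
    then show "L \<in> {join (dv0 s0 s1) (dv1 s0 s1) | s0 s1. (s0,s1) \<noteq> (0,0)}"
    proof cases
      case (1 t) then show ?thesis using mem_tset[of 1 t] unfolding tangent_dv[OF three] by simp
    next
      case 2 then show ?thesis using mem_tset[of 0 1] unfolding tangent_inf_dv[OF three] by simp
    qed
  qed
next
  show "{join (dv0 s0 s1) (dv1 s0 (s1::'a)) | s0 s1. (s0,s1) \<noteq> (0,0)} \<subseteq> tangents"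
  proof
    fix L assume "L \<in> {join (dv0 s0 s1) (dv1 s0 (s1::'a)) | s0 s1. (s0,s1) \<noteq> (0,0)}"
    then obtain s0 s1 where "L = join (dv0 s0 s1) (dv1 s0 s1)" "(s0,s1) \<noteq> (0,0)" by blast
    then show "L \<in> tangents" using tan_join[OF three] by simp
  qed
qed


lemma det_nz: assumes "a*d - b*c \<noteq> (0::'a::field)" "(s0,s1) \<noteq> (0,0)"
  shows "(a*s0+c*s1, b*s0+d*s1) \<noteq> (0,0)"
proof
  assume "(a*s0+c*s1, b*s0+d*s1) = (0,0)"
  then have z: "a*s0+c*s1 = 0" "b*s0+d*s1 = 0" by auto
  have "s0*(a*d-b*c) = d*(a*s0+c*s1) - c*(b*s0+d*s1)" "s1*(a*d-b*c) = a*(b*s0+d*s1) - b*(a*s0+c*s1)"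
    by (simp_all add: algebra_simps)
  then have "s0*(a*d-b*c) = 0" "s1*(a*d-b*c) = 0" using z by simp_all
  then show False using assms by simp
qed

lemma vec_ext: "w = (dot4 w (1,0,0,0), dot4 w (0,1,0,0), dot4 w (0,0,1,0), dot4 (w::'a::field v4) (0,0,0,1))"
  by (cases w rule: prod_cases4) (simp add: tup)

lemma tr_ov: "tr (gmap a b c d) (ov t0 t1) = ov (d*t0 - c*t1) (a*t1 - b*t0)"
  unfolding tr_def dot_ov_gmap by (rule vec_ext[symmetric])

lemma lin_add: "lin g \<Longrightarrow> g (vadd v w) = vadd (g v) (g w)" unfolding lin_def by blast

lemma lin_join: assumes "lin g" shows "line_act g (join x y) = join (g x) (g y)"
proof -
  have 1: "g (vadd (sc p x) (sc q y)) = vadd (sc p (g x)) (sc q (g y))" for p q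
    by (simp only: lin_add[OF assms] lin_sc[OF assms])
  have "line_act g (join x y) = {g ` pt (vadd (sc p x) (sc q y)) | p q. (p,q) \<noteq> (0,0)}"
    unfolding line_act_def join_def by blast
  also have "\<dots> = join (g x) (g y)" unfolding join_def lin_img_pt[OF assms] 1 ..
  finally show ?thesis .
qed

lemma GmapsE: "g \<in> Gmaps \<Longrightarrow> (\<And>a b c d. g = gmap a b c d \<Longrightarrow> a*d-b*c \<noteq> 0 \<Longrightarrow> thesis) \<Longrightarrow> thesis"
  unfolding Gmaps_def by blast

lemma G_curve: assumes "g \<in> Gmaps" "P \<in> curve" shows "g ` P \<in> curve"
proof -
  obtain a b c d where g: "g = gmap a b c d" "a*d-b*c \<noteq> 0" using assms(1) by (rule GmapsE)
  obtain s0 s1 where P: "P = pt (cv s0 s1)" "(s0,s1) \<noteq> (0,0)" using assms(2) unfolding curve_hom by blast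
  have "g ` P = pt (cv (a*s0+c*s1) (b*s0+d*s1))"
    unfolding P g lin_img_pt[OF gmap_lin] gmap_cv ..
  then show ?thesis using pt_cv_curve det_nz[OF g(2) P(2)] by simp
qed

lemma G_osc: assumes "g \<in> Gmaps" "H \<in> osc_planes" shows "line_act g H \<in> osc_planes"
proof -
  obtain a b c d where g: "g = gmap a b c d" "a*d-b*c \<noteq> 0" using assms(1) by (rule GmapsE)
  obtain t0 t1 where H: "H = plane (ov t0 t1)" "(t0,t1) \<noteq> (0,0)" using assms(2) unfolding osc_hom by blast
  interpret ipair "gmap a b c d" "gmap d (-b) (-c) a" "(a*d-b*c)^3" by (rule gmap_ipair[OF g(2)])
  have "line_act g H = plane (ov (a*t0 + c*t1) (b*t0 + d*t1))"
    unfolding H g img_plane tr_ov by (simp add: algebra_simps)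
  then show ?thesis using osc_plane_ov det_nz[OF g(2) H(2)] by simp
qed

lemma G_planes: assumes "g \<in> Gmaps" "H \<in> planes" shows "line_act g H \<in> planes"
proof -
  obtain h k where i: "ipair g h k" using Gmaps_inv[OF assms(1)] by blast
  obtain u where H: "H = plane u" "u \<noteq> zero4" using assms(2) unfolding planes_def by blast
  have "line_act g H = plane (tr h u)" using ipair.img_plane[OF i] H by simp
  moreover have "tr h u \<noteq> zero4" using ipair.tr_nz[OF ipair.sym[OF i] H(2)] .
  ultimately show ?thesis unfolding planes_def by blast
qed

lemma G_tan: assumes three: "(3::'a::field) \<noteq> 0" and "g \<in> Gmaps" "L \<in> (tangents :: 'a v4 set set set)"
  shows "line_act g L \<in> tangents"
proof -
  obtain a b c d where g: "g = gmap a b c d" "a*d-b*c \<noteq> 0" using assms(2) by (rule GmapsE)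
  obtain s0 s1 where L: "L = join (dv0 s0 s1) (dv1 s0 s1)" "(s0,s1) \<noteq> (0,0)"
    using assms(3) unfolding tangents_hom[OF three] by blast
  have "line_act g L = join (dv0 (a*s0+c*s1) (b*s0+d*s1)) (dv1 (a*s0+c*s1) (b*s0+d*s1))"
    unfolding L g lin_join[OF gmap_lin] gmap_dv0 gmap_dv1 by (rule join_sub[OF g(2)])
  then show ?thesis using tan_join[OF three det_nz[OF g(2) L(2)]] by simp
qed

lemma curve_points: "curve \<subseteq> points"
  unfolding curve_hom using cv_nz pt_in_points by blast
lemma osc_sub_planes: "osc_planes \<subseteq> planes"
  unfolding osc_hom planes_def using ov_nz by blast
lemma planes_pow: "planes \<subseteq> Pow points"
  unfolding planes_def using plane_sub by blast

definition ptcl :: "'a::field v4 set set \<Rightarrow> bool" where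
  "ptcl C \<longleftrightarrow> C \<subseteq> points \<and> (\<forall>g\<in>Gmaps. \<forall>P\<in>C. g ` P \<in> C)"
definition hcl :: "'a::field v4 set set set \<Rightarrow> bool" where
  "hcl D \<longleftrightarrow> D \<subseteq> Pow points \<and> (\<forall>g\<in>Gmaps. \<forall>H\<in>D. line_act g H \<in> D)"

lemma ptcl_card: assumes "ptcl C" "g \<in> Gmaps" "l \<subseteq> points"
  shows "card (line_act g l \<inter> C) = card (l \<inter> C)"
proof -
  obtain h k where i: "ipair g h k" "h \<in> Gmaps" using Gmaps_inv[OF assms(2)] by blast
  show ?thesis using assms i unfolding ptcl_def by (intro ipair.pclass_card[OF i(1)]) auto
qed

lemma hcl_card: assumes "hcl D" "g \<in> Gmaps" "l \<subseteq> points"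
  shows "card {H \<in> D. line_act g l \<subseteq> H} = card {H \<in> D. l \<subseteq> H}"
proof -
  obtain h k where i: "ipair g h k" "h \<in> Gmaps" using Gmaps_inv[OF assms(2)] by blast
  show ?thesis using assms i unfolding hcl_def by (intro ipair.hclass_card[OF i(1)]) auto
qed

lemma ptcl_curve: "ptcl curve" unfolding ptcl_def using curve_points G_curve by blast
lemma hcl_osc: "hcl osc_planes" unfolding hcl_def using osc_sub_planes planes_pow G_osc by blast
lemma hcl_planes: "hcl planes" unfolding hcl_def using planes_pow G_planes by blast


lemma la_single: "line_act g {P} = {g ` P}" unfolding line_act_def by simp

lemma nosc_alt: "n_osc P = card {H \<in> osc_planes. {P} \<subseteq> H}" unfolding n_osc_def by simp

lemma nosc_inv: assumes "g \<in> Gmaps" "P \<in> points" shows "n_osc (g ` P) = n_osc P"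
  using hcl_card[OF hcl_osc assms(1), of "{P}"] assms(2) unfolding nosc_alt la_single by simp

lemma G_back: assumes "g \<in> Gmaps" "P \<in> points"
  obtains h where "h \<in> Gmaps" "h ` (g ` P) = P"
proof -
  obtain h k where i: "ipair g h k" "h \<in> Gmaps" using Gmaps_inv[OF assms(1)] by blast
  show ?thesis using that[OF i(2)] ipair.hg_pt[OF i(1) assms(2)] by blast
qed

lemma G_back_set: assumes "g \<in> Gmaps" "S \<subseteq> points"
  obtains h where "h \<in> Gmaps" "line_act h (line_act g S) = S"
proof -
  obtain h k where i: "ipair g h k" "h \<in> Gmaps" using Gmaps_inv[OF assms(1)] by blast
  show ?thesis using that[OF i(2)] ipair.la_inv[OF i(1) assms(2)] by blast
qed

lemma G_points: assumes "g \<in> Gmaps" "P \<in> points" shows "g ` P \<in> points"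
proof -
  obtain h k where i: "ipair g h k" using Gmaps_inv[OF assms(1)] by blast
  show ?thesis using ipair.img_points[OF i assms(2)] .
qed

lemma G_notcurve: assumes "g \<in> Gmaps" "P \<in> points" "P \<notin> curve" shows "g ` P \<notin> curve"
proof
  assume "g ` P \<in> curve"
  obtain h where "h \<in> Gmaps" "h ` (g ` P) = P" using G_back[OF assms(1,2)] by blast
  then show False using G_curve \<open>g ` P \<in> curve\<close> assms(3) by metis
qed

lemma ptcl_PC2: assumes three: "(3::'a::field) \<noteq> 0" shows "ptcl (PC2 :: 'a v4 set set)"
  unfolding ptcl_def
proof (intro conjI ballI)
  show "(PC2::'a v4 set set) \<subseteq> points" unfolding PC2_def by blast
next
  fix g :: "'a v4 \<Rightarrow> 'a v4" and P assume g: "g \<in> Gmaps" and P: "P \<in> (PC2 :: 'a v4 set set)"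
  then have Pp: "P \<in> points" "P \<notin> curve" and "\<exists>L\<in>tangents. P \<in> L" unfolding PC2_def by auto
  then obtain L where L: "L \<in> tangents" "P \<in> L" by blast
  have "g ` P \<in> line_act g L" using L(2) unfolding line_act_def by blast
  moreover have "line_act g L \<in> tangents" using G_tan[OF three g L(1)] .
  ultimately show "g ` P \<in> PC2" unfolding PC2_def using G_points[OF g Pp(1)] G_notcurve[OF g Pp] by blast
qed

lemma ptcl_nosc: "ptcl {P \<in> points. P \<notin> curve \<and> n_osc P = m}"
  unfolding ptcl_def using G_points G_notcurve nosc_inv by auto
lemma ptcl_nosc0: "ptcl {P \<in> points. n_osc P = m}"
  unfolding ptcl_def using G_points nosc_inv by auto

lemma hcl_card_curve: "hcl {H \<in> (planes :: 'a::field v4 set set set). card (H \<inter> curve) = m}"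
  unfolding hcl_def
proof (intro conjI ballI)
  show "{H \<in> planes. card (H \<inter> curve) = m} \<subseteq> Pow points" using planes_pow by blast
next
  fix g :: "'a v4 \<Rightarrow> 'a v4" and H :: "'a v4 set set" assume g: "g \<in> Gmaps" and H: "H \<in> {H \<in> planes. card (H \<inter> curve) = m}"
  have Hp: "H \<subseteq> points" using H planes_pow by blast
  show "line_act g H \<in> {H \<in> (planes :: 'a v4 set set set). card (H \<inter> curve) = m}"
    using G_planes[OF g] H ptcl_card[OF ptcl_curve g Hp] by simp
qed

lemma hcl_HC4: "hcl {H \<in> (planes :: 'a::field v4 set set set). H \<notin> osc_planes \<and> card (H \<inter> curve) = m}"
  unfolding hcl_def
proof (intro conjI ballI)
  show "{H \<in> planes. H \<notin> osc_planes \<and> card (H \<inter> curve) = m} \<subseteq> Pow points" using planes_pow by blast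
next
  fix g :: "'a v4 \<Rightarrow> 'a v4" and H :: "'a v4 set set" assume g: "g \<in> Gmaps" and H: "H \<in> {H \<in> planes. H \<notin> osc_planes \<and> card (H \<inter> curve) = m}"
  have Hp: "H \<subseteq> points" using H planes_pow by blast
  obtain h where h: "h \<in> Gmaps" "line_act h (line_act g H) = H" using G_back_set[OF g Hp] by blast
  have "line_act g H \<notin> osc_planes"
  proof
    assume "line_act g H \<in> osc_planes"
    then have "line_act h (line_act g H) \<in> osc_planes" by (rule G_osc[OF h(1)])
    then show False using h(2) H by simp
  qed
  then show "line_act g H \<in> {H \<in> (planes :: 'a v4 set set set). H \<notin> osc_planes \<and> card (H \<inter> curve) = m}"
    using G_planes[OF g] H ptcl_card[OF ptcl_curve g Hp] by simp
qed

lemma la_curve_empty: assumes "g \<in> Gmaps" "S \<subseteq> points" "S \<inter> curve = {}"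
  shows "line_act g S \<inter> curve = {}"
proof (rule ccontr)
  assume "line_act g S \<inter> curve \<noteq> {}"
  then obtain P where P: "P \<in> S" "g ` P \<in> curve" unfolding line_act_def by blast
  obtain h where "h \<in> Gmaps" "h ` (g ` P) = P" using G_back[OF assms(1)] P(1) assms(2) by blast
  then have "P \<in> curve" using G_curve P(2) by metis
  then show False using P(1) assms(3) by blast
qed

lemma hcl_HC5: "hcl (HC5 :: 'a::field v4 set set set)"
  unfolding hcl_def HC5_def
proof (intro conjI ballI)
  show "{H \<in> (planes :: 'a::field v4 set set set). H \<inter> curve = {}} \<subseteq> Pow points" using planes_pow by blast
next
  fix g :: "'a v4 \<Rightarrow> 'a v4" and H :: "'a v4 set set" assume g: "g \<in> Gmaps" and H: "H \<in> {H \<in> (planes :: 'a::field v4 set set set). H \<inter> curve = {}}"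
  have Hp: "H \<subseteq> points" using H planes_pow by blast
  show "line_act g H \<in> {H \<in> planes. H \<inter> curve = {}}"
    using G_planes[OF g] H la_curve_empty[OF g Hp] by simp
qed

lemma OD_inv: assumes three: "(3::'a::field) \<noteq> 0" and g: "g \<in> Gmaps" and l: "l \<subseteq> (points :: 'a v4 set set)"
  shows "OD0 (line_act g l) = OD0 l" "OD2 (line_act g l) = OD2 l"
proof -
  have p: "ptcl (PC1::'a v4 set set)" "ptcl (PC2::'a v4 set set)" "ptcl (PC3::'a v4 set set)" "ptcl (PC4::'a v4 set set)" "ptcl (PC5::'a v4 set set)"
    using ptcl_curve ptcl_PC2[OF three] ptcl_nosc ptcl_nosc0 unfolding PC1_def PC3_def PC4_def PC5_def by auto
  show "OD0 (line_act g l) = OD0 l" unfolding OD0_def using ptcl_card[OF _ g l] p by simp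
  have q: "hcl (HC1::'a v4 set set set)" "hcl (HC2::'a v4 set set set)" "hcl (HC3::'a v4 set set set)" "hcl (HC4::'a v4 set set set)" "hcl (HC5::'a v4 set set set)"
    using hcl_osc hcl_card_curve hcl_HC4 hcl_HC5 unfolding HC1_def HC2_def HC3_def HC4_def by auto
  show "OD2 (line_act g l) = OD2 l" unfolding OD2_def using hcl_card[OF _ g l] q by simp
qed


lemma osc_la: assumes "a*d-b*c \<noteq> (0::'a::field)"
  shows "line_act (gmap a b c d) (plane (ov t0 t1)) = plane (ov (a*t0+c*t1) (b*t0+d*t1))"
proof -
  interpret ipair "gmap a b c d" "gmap d (-b) (-c) a" "(a*d-b*c)^3" by (rule gmap_ipair[OF assms])
  show ?thesis unfolding img_plane tr_ov by (simp add: algebra_simps)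
qed

lemma prop_plane: assumes s: "(s0,s1) \<noteq> (0,0)" and t: "(t0,t1) \<noteq> (0,0)" and e: "t0*s1 - t1*s0 = (0::'a::field)"
  shows "plane (ov s0 s1) = plane (ov t0 t1)"
proof -
  obtain k where k: "k \<noteq> 0" "s0 = k*t0" "s1 = k*t1"
  proof (cases "t0 = 0")
    case True
    then have t1: "t1 \<noteq> 0" using t by simp
    have "s0 = 0" using e True t1 by simp
    then show ?thesis using that[of "s1/t1"] s t1 True by simp
  next
    case False
    have "s1 = (s0/t0)*t1" using e False by (simp add: field_simps)
    moreover have "s0 \<noteq> 0" using s e False \<open>s1 = (s0/t0)*t1\<close> by auto
    ultimately show ?thesis using that[of "s0/t0"] False by simp
  qed
  then show ?thesis using ov_scale[of k t0 t1] plane_sc[of "k^3"] by simp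
qed

definition l0 :: "'a::field v4 set set" where "l0 = osc_inf \<inter> osc 0"

lemma Pinf_osc_inf: "Pinf \<in> osc_inf"
  by (simp add: Pinf_def osc_inf_def pt_in_plane zero4_tuple dot_tuple)
lemma Pinf_osc: "Pinf \<notin> osc t"
  by (simp add: Pinf_def osc_def pt_in_plane zero4_tuple dot_tuple)
lemma osc_inf_ne: "osc_inf \<noteq> osc t" using Pinf_osc_inf Pinf_osc by metis

lemma osc0_ov: "osc 0 = plane (ov 1 (0::'a::field))" by (rule osc_ov)

lemma l0_points: "l0 \<subseteq> points" unfolding l0_def using plane_sub osc_inf_def by blast

lemma Pc_osc_inf: "Pc t \<notin> osc_inf"
  by (simp add: Pc_def osc_inf_def pt_in_plane zero4_tuple dot_tuple)

lemma l0_curve: "l0 \<inter> curve = {}"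
  unfolding l0_def curve_def using Pc_osc_inf Pinf_osc by blast

lemma orbit_sub: assumes "g \<in> Gmaps" shows "line_act g l0 \<in> L1"
proof -
  obtain h k where i: "ipair g h k" using Gmaps_inv[OF assms] by blast
  have p1: "osc_inf \<subseteq> points" "osc 0 \<subseteq> points" unfolding osc_inf_def osc_def using plane_sub by blast+
  have e: "line_act g l0 = line_act g osc_inf \<inter> line_act g (osc 0)"
    unfolding l0_def by (rule ipair.la_inter[OF i p1])
  have o: "line_act g osc_inf \<in> osc_planes" "line_act g (osc 0) \<in> osc_planes"
    using G_osc[OF assms] osc_inf_in osc_in by blast+
  have ne: "line_act g osc_inf \<noteq> line_act g (osc 0)"
    using inj_onD[OF ipair.la_inj[OF i], of osc_inf "osc 0"] p1 osc_inf_ne by blast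
  have "line_act g l0 \<in> lines" unfolding lines_def e using o osc_sub_planes ne by blast
  then show ?thesis unfolding L1_def using e o ne by blast
qed

lemma sub_orbit: assumes "l \<in> L1" shows "\<exists>g\<in>Gmaps. l = line_act g l0"
proof -
  obtain H K where HK: "H \<in> osc_planes" "K \<in> osc_planes" "H \<noteq> K" "l = H \<inter> K"
    using assms unfolding L1_def by blast
  obtain s0 s1 where s: "H = plane (ov s0 s1)" "(s0,s1) \<noteq> (0,0)" using HK(1) unfolding osc_hom by blast
  obtain t0 t1 where t: "K = plane (ov t0 t1)" "(t0,t1) \<noteq> (0,0)" using HK(2) unfolding osc_hom by blast
  have det: "t0*s1 - t1*s0 \<noteq> 0" using prop_plane[OF s(2) t(2)] HK(3) s(1) t(1) by auto
  define g where "g = gmap t0 t1 s0 s1"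
  have gG: "g \<in> Gmaps" unfolding g_def Gmaps_def using det by blast
  obtain h k where i: "ipair g h k" using Gmaps_inv[OF gG] by blast
  have p1: "osc_inf \<subseteq> points" "osc 0 \<subseteq> points" unfolding osc_inf_def osc_def using plane_sub by blast+
  have "line_act g osc_inf = H" unfolding g_def osc_inf_ov osc_la[OF det] s(1) by simp
  moreover have "line_act g (osc 0) = K" unfolding g_def osc0_ov osc_la[OF det] t(1) by simp
  moreover have "line_act g l0 = line_act g osc_inf \<inter> line_act g (osc 0)"
    unfolding l0_def by (rule ipair.la_inter[OF i p1])
  ultimately show ?thesis using gG HK(4) by blast
qed

lemma L1_orbit: "L1 = {line_act g l0 | g. g \<in> Gmaps}"
  using orbit_sub sub_orbit by blast


definition cr :: "'a::field \<Rightarrow> 'a set" where "cr c = {t. t^3 = c}"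

lemma cr_zero: "cr (0::'a::field) = {0}" unfolding cr_def by auto

lemma cr_shift: assumes "x^3 = c" "c \<noteq> (0::'a::field)" shows "cr c = (\<lambda>w. x*w) ` cr 1"
proof -
  have x: "x \<noteq> 0" using assms by auto
  have "t \<in> (\<lambda>w. x*w) ` cr 1" if "t^3 = c" for t
  proof
    show "t = x * (t/x)" using x by simp
    show "t/x \<in> cr 1" unfolding cr_def using that assms x by (simp add: power_divide)
  qed
  moreover have "(x*w)^3 = c" if "w^3 = 1" for w using that assms by (simp add: power_mult_distrib)
  ultimately show ?thesis unfolding cr_def by auto
qed

lemma card_cr_shift: assumes "x^3 = c" "c \<noteq> (0::'a::field)" shows "card (cr c) = card (cr (1::'a))"
proof -
  have "inj_on (\<lambda>w. x*w) (cr 1)" using assms by (auto intro!: inj_onI)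
  then show ?thesis using cr_shift[OF assms] by (simp add: card_image)
qed

lemma cr1_cases: assumes two: "(2::'a::field) \<noteq> 0" and three: "(3::'a) \<noteq> 0"
  shows "cr (1::'a) = {1} \<or> (\<exists>w::'a. cr 1 = {1, w, -1-w} \<and> w \<noteq> 1 \<and> -1-w \<noteq> 1 \<and> w \<noteq> -1-w)"
proof (cases "\<exists>w. w^2+w+1 = (0::'a)")
  case False
  have "w = 1" if "w^3 = 1" for w :: 'a
  proof -
    have "(w-1)*(w^2+w+1) = 0" using that by (simp add: algebra_simps power3_eq_cube power2_eq_square)
    then show ?thesis using False by simp
  qed
  then have "cr 1 = {1::'a}" unfolding cr_def by auto
  then show ?thesis by simp
next
  case True
  then obtain w :: 'a where w: "w^2+w+1 = 0" by blast
  have fac: "(x-1)*((x-w)*(x-(-1-w))) = x^3 - 1" for x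
  proof -
    have "(x-w)*(x-(-1-w)) = x^2+x+1 - (w^2+w+1)" by (simp add: algebra_simps power2_eq_square)
    then have "(x-w)*(x-(-1-w)) = x^2+x+1" using w by simp
    moreover have "(x-1)*(x^2+x+1) = x^3 - 1" by (simp add: algebra_simps power2_eq_square power3_eq_cube)
    ultimately show ?thesis by simp
  qed
  have "cr 1 = {1, w, -1-w}"
  proof -
    have "x^3 = 1 \<longleftrightarrow> x = 1 \<or> x = w \<or> x = -1-w" for x
    proof -
      have "x^3 = 1 \<longleftrightarrow> (x-1)*((x-w)*(x-(-1-w))) = 0" using fac[of x] by simp
      also have "\<dots> \<longleftrightarrow> x = 1 \<or> x = w \<or> x = -1-w" by simp
      finally show ?thesis .
    qed
    then show ?thesis unfolding cr_def by auto
  qed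
  moreover have "w \<noteq> 1"
  proof
    assume "w = 1" then have "(3::'a) = 0" using w by simp
    then show False using three by simp
  qed
  moreover have "-1-w \<noteq> 1"
  proof
    assume "-1-w = 1" then have "w = -2" by (simp add: algebra_simps eq_neg_iff_add_eq_0)
    then have "(3::'a) = 0" using w by (simp add: power2_eq_square)
    then show False using three by simp
  qed
  moreover have "w \<noteq> -1-w"
  proof
    assume "w = -1-w" then have "2*w+1 = 0" by (simp add: algebra_simps)
    moreover have "4*(w^2+w+1) = (2*w+1)^2 + 3" by (simp add: algebra_simps power2_eq_square)
    ultimately have "(3::'a) = 0" using w by simp
    then show False using three by simp
  qed
  ultimately have "cr 1 = {1, w, -1-w} \<and> w \<noteq> 1 \<and> -1-w \<noteq> 1 \<and> w \<noteq> -1-w" by (intro conjI)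
  then show ?thesis by (intro disjI2 exI[of _ w])
qed

lemma card_cr1: assumes "(2::'a::field) \<noteq> 0" "(3::'a) \<noteq> 0"
  shows "card (cr (1::'a)) = 1 \<or> card (cr (1::'a)) = 3"
proof -
  from cr1_cases[OF assms] show ?thesis
  proof
    assume "cr 1 = {1::'a}" then show ?thesis by simp
  next
    assume "\<exists>w::'a. cr 1 = {1, w, -1-w} \<and> w \<noteq> 1 \<and> -1-w \<noteq> 1 \<and> w \<noteq> -1-w"
    then obtain w :: 'a where "cr 1 = {1, w, -1-w}" "w \<noteq> 1" "-1-w \<noteq> 1" "w \<noteq> -1-w" by blast
    moreover have "(1::'a) \<notin> {w, -1-w}" "w \<notin> {-1-w}" using \<open>w \<noteq> 1\<close> \<open>-1-w \<noteq> 1\<close> \<open>w \<noteq> -1-w\<close> by auto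
    ultimately have "card (cr (1::'a)) = 3" by simp
    then show ?thesis by simp
  qed
qed


lemma cr_nonzero: "c \<noteq> 0 \<Longrightarrow> t \<in> cr c \<Longrightarrow> t \<noteq> (0::'a::field)"
  unfolding cr_def by auto

lemma card_cr_cases: assumes "c \<noteq> (0::'a::field)"
  shows "cr c = {} \<or> card (cr c) = card (cr (1::'a))"
proof (cases "cr c = {}")
  case False
  then obtain x where "x^3 = c" unfolding cr_def by auto
  then show ?thesis using card_cr_shift[of x c] assms by simp
qed simp

lemma fiber_count:
  fixes dummy :: "'a::{field,finite}"
  shows "card (UNIV - {0::'a}) = card (cr (1::'a)) * card {c::'a. c \<noteq> 0 \<and> cr c \<noteq> {}}"
proof -
  define I where "I = {c::'a. c \<noteq> 0 \<and> cr c \<noteq> {}}"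
  have U: "UNIV - {0::'a} = (\<Union>c\<in>I. cr c)"
  proof
    show "UNIV - {0::'a} \<subseteq> (\<Union>c\<in>I. cr c)"
    proof
      fix t :: 'a assume "t \<in> UNIV - {0}"
      then have t: "t \<noteq> 0" by simp
      have "t \<in> cr (t^3)" unfolding cr_def by simp
      moreover have "t^3 \<in> I" unfolding I_def using t \<open>t \<in> cr (t^3)\<close> by auto
      ultimately show "t \<in> (\<Union>c\<in>I. cr c)" by blast
    qed
  next
    show "(\<Union>c\<in>I. cr c) \<subseteq> UNIV - {0::'a}" unfolding I_def using cr_nonzero by blast
  qed
  have "card (\<Union>c\<in>I. cr c) = (\<Sum>c\<in>I. card (cr c))"
    by (rule card_UN_disjoint) (auto simp: cr_def)
  also have "\<dots> = (\<Sum>c\<in>I. card (cr (1::'a)))"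
    by (rule sum.cong) (use card_cr_cases in \<open>auto simp: I_def\<close>)
  also have "\<dots> = card (cr (1::'a)) * card I" by simp
  finally show ?thesis using U unfolding I_def by simp
qed

lemma card_units: "card (UNIV - {0::'a::{field,finite}}) = card (UNIV::'a set) - 1"
  by (simp add: card_Diff_singleton)

lemma fermat:
  fixes x :: "'a::{field,finite}"
  assumes x: "x \<noteq> 0"
  shows "x ^ (card (UNIV::'a set) - 1) = 1"
proof -
  define U where "U = UNIV - {0::'a}"
  have bij: "bij_betw (\<lambda>y. x*y) U U"
  proof (rule bij_betw_imageI)
    show "inj_on (\<lambda>y. x*y) U" using x by (auto intro!: inj_onI)
    show "(\<lambda>y. x*y) ` U = U"
    proof
      show "(\<lambda>y. x*y) ` U \<subseteq> U" using x unfolding U_def by auto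
      show "U \<subseteq> (\<lambda>y. x*y) ` U"
      proof
        fix y assume y: "y \<in> U"
        have "y = x * (y/x)" using x by simp
        moreover have "y/x \<in> U" using x y unfolding U_def by auto
        ultimately show "y \<in> (\<lambda>y. x*y) ` U" by blast
      qed
    qed
  qed
  have "(\<Prod>y\<in>U. x*y) = (\<Prod>y\<in>U. y)" by (rule prod.reindex_bij_betw[OF bij])
  moreover have "(\<Prod>y\<in>U. x*y) = x ^ card U * (\<Prod>y\<in>U. y)" by (simp add: prod.distrib)
  moreover have "(\<Prod>y\<in>U. y) \<noteq> 0" unfolding U_def by simp
  ultimately have "x ^ card U = 1" by simp
  then show ?thesis unfolding U_def card_units .
qed

lemma roots_bound:
  assumes m: "m > 0"
  shows "card {x::'a::{field,finite}. x^m = 1} \<le> m"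
proof -
  define p :: "'a poly" where "p = monom 1 m - [:1:]"
  have ev: "poly p x = x^m - 1" for x unfolding p_def by (simp add: poly_monom)
  have "coeff p m = 1" unfolding p_def using m by (cases m) (simp_all add: coeff_monom)
  then have nz: "p \<noteq> 0" by auto
  have dg: "degree p \<le> m" unfolding p_def
    by (rule order.trans[OF degree_diff_le_max]) (simp add: degree_monom_le)
  have "{x. x^m = 1} = {x. poly p x = 0}" using ev by simp
  then show ?thesis using card_poly_roots_bound[OF nz] dg by simp
qed

lemma card_cr1_dvd:
  assumes two: "(2::'a::{field,finite}) \<noteq> 0" and three: "(3::'a) \<noteq> 0"
    and d: "3 dvd (card (UNIV::'a set) - 1)"
  shows "card (cr (1::'a)) = 3"
proof (rule ccontr)
  assume ne: "card (cr (1::'a)) \<noteq> 3"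
  define q where "q = card (UNIV::'a set)"
  have q2: "q \<ge> 2"
  proof -
    have "{0::'a, 1} \<subseteq> UNIV" by simp
    then have "card {0::'a, 1} \<le> q" unfolding q_def by (rule card_mono[OF finite_UNIV])
    then show ?thesis by simp
  qed
  obtain m where m: "q - 1 = 3*m" using d unfolding q_def by blast
  have m0: "m > 0" using m q2 by simp
  have "card {x::'a. x^m = 1} \<le> m" by (rule roots_bound[OF m0])
  also have "m < card (UNIV - {0::'a})" using m m0 card_units[where 'a='a] unfolding q_def by simp
  finally have "{x::'a. x^m = 1} \<noteq> UNIV - {0}" by (metis less_irrefl)
  moreover have "{x::'a. x^m = 1} \<subseteq> UNIV - {0}" using m0 by (auto simp: zero_power)
  ultimately obtain y :: 'a where y: "y \<noteq> 0" "y^m \<noteq> 1" by blast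
  have "(y^m)^3 = y^(m*3)" by (simp add: power_mult)
  also have "m*3 = q-1" using m by simp
  finally have "(y^m)^3 = y^(q-1)" .
  also have "\<dots> = 1" using fermat[OF y(1)] unfolding q_def .
  finally have "y^m \<in> cr 1" unfolding cr_def by simp
  moreover have "cr (1::'a) = {1}"
  proof -
    have c1: "card (cr (1::'a)) = 1" using ne card_cr1[OF two three] by blast
    have "(1::'a) \<in> cr 1" unfolding cr_def by simp
    then show ?thesis using c1 by (metis card_1_singletonE singletonD)
  qed
  ultimately show False using y(2) by simp
qed

lemma card_cr1_ndvd:
  assumes two: "(2::'a::{field,finite}) \<noteq> 0" and three: "(3::'a) \<noteq> 0"
    and d: "\<not> 3 dvd (card (UNIV::'a set) - 1)"
  shows "card (cr (1::'a)) = 1"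
proof (rule ccontr)
  assume "card (cr (1::'a)) \<noteq> 1"
  then have "card (cr (1::'a)) = 3" using card_cr1[OF two three] by auto
  then have "card (UNIV::'a set) - 1 = 3 * card {c::'a. c \<noteq> 0 \<and> cr c \<noteq> {}}"
    using fiber_count[where 'a='a] card_units[where 'a='a] by simp
  then show False using d by simp
qed


abbreviation ptA :: "'a::field v4 set" where "ptA \<equiv> pt (0,1,0,0)"
abbreviation ptB :: "'a::field v4 set" where "ptB \<equiv> pt (0,0,1,0)"
definition ptC :: "'a::field \<Rightarrow> 'a v4 set" where "ptC y = pt (0,1,y,0)"
definition Ep :: "'a::field \<Rightarrow> 'a v4 set set" where "Ep a = plane (a,0,0,1)"

lemma nz_tuple: "(x0,x1,x2,x3) \<noteq> zero4 \<longleftrightarrow> x0 \<noteq> 0 \<or> x1 \<noteq> 0 \<or> x2 \<noteq> 0 \<or> x3 \<noteq> 0"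
  by (auto simp: zero4_tuple)

lemma pt_tuple_eq: "pt (x0,x1,x2,x3) = pt (y0,y1,y2,y3) \<longleftrightarrow>
    (\<exists>c. c \<noteq> 0 \<and> y0 = c*x0 \<and> y1 = c*x1 \<and> y2 = c*x2 \<and> y3 = c*(x3::'a::field))"
  unfolding pt_eq_iff by (simp add: sc_tuple)

lemma in_plane_tuple: "(x0,x1,x2,x3) \<noteq> zero4 \<Longrightarrow>
   pt (x0,x1,x2,x3) \<in> plane (u0,u1,u2,u3) \<longleftrightarrow> u0*x0+u1*x1+u2*x2+u3*(x3::'a::field) = 0"
  by (simp add: pt_in_plane dot_tuple)

lemma osc_vec: "osc t = plane (-(t^3), 3*t^2, -(3*t), 1)" by (simp add: osc_def)

lemma ptC_osc_inf: "ptC y \<in> osc_inf" by (simp add: ptC_def osc_inf_def in_plane_tuple nz_tuple)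
lemma ptB_osc_inf: "ptB \<in> osc_inf" by (simp add: osc_inf_def in_plane_tuple nz_tuple)
lemma ptC_osc: assumes "(3::'a::field) \<noteq> 0" shows "ptC y \<in> osc t \<longleftrightarrow> t = 0 \<or> t = (y::'a)"
proof -
  have "ptC y \<in> osc t \<longleftrightarrow> 3*t^2 - 3*t*y = 0" by (simp add: ptC_def osc_vec in_plane_tuple nz_tuple)
  also have "3*t^2 - 3*t*y = 3*(t*(t-y))" by (simp add: algebra_simps power2_eq_square)
  finally show ?thesis using assms by simp
qed
lemma ptB_osc: assumes "(3::'a::field) \<noteq> 0" shows "ptB \<in> osc t \<longleftrightarrow> t = (0::'a)"
  using assms by (simp add: osc_vec in_plane_tuple nz_tuple)

lemma Pc_osc: "Pc s \<in> osc t \<longleftrightarrow> s = (t::'a::field)"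
proof -
  have "Pc s \<in> osc t \<longleftrightarrow> -(t^3) + 3*t^2*s - 3*t*s^2 + s^3 = 0"
    by (simp add: Pc_def osc_vec in_plane_tuple nz_tuple algebra_simps)
  also have "-(t^3) + 3*t^2*s - 3*t*s^2 + s^3 = (s-t)^3" by (simp add: algebra_simps power2_eq_square power3_eq_cube)
  finally show ?thesis by simp
qed
lemma osc_inj: "inj (osc :: 'a::field \<Rightarrow> _)"
  by (rule injI) (metis Pc_osc)

lemma Pc_inj: "inj (Pc :: 'a::field \<Rightarrow> _)"
  by (rule injI) (simp add: Pc_def pt_tuple_eq)
lemma ptC_inj: "inj (ptC :: 'a::field \<Rightarrow> _)"
  by (rule injI) (simp add: ptC_def pt_tuple_eq)
lemma ptA_ne_ptB: "ptA \<noteq> (ptB :: 'a::field v4 set)" by (simp add: pt_tuple_eq)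
lemma ptC_ne_ptB: "ptC y \<noteq> (ptB :: 'a::field v4 set)" by (simp add: ptC_def pt_tuple_eq)
lemma ptC0: "ptC 0 = ptA" by (simp add: ptC_def)

lemma l0_eq: "l0 = insert ptB (range (ptC :: 'a::field \<Rightarrow> _))"
proof
  show "l0 \<subseteq> insert ptB (range (ptC :: 'a::field \<Rightarrow> _))"
  proof
    fix P :: "'a v4 set" assume P: "P \<in> l0"
    then have Pp: "P \<in> points" using l0_points by blast
    then obtain v0 v1 v2 v3 where v: "P = pt (v0,v1,v2,v3)" "(v0,v1,v2,v3) \<noteq> zero4"
      by (metis pointsE prod_cases4)
    have "P \<in> osc_inf" "P \<in> osc 0" using P unfolding l0_def by auto
    then have z: "v0 = 0" "v3 = 0" using v by (simp_all add: osc_inf_def osc_vec in_plane_tuple)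
    show "P \<in> insert ptB (range ptC)"
    proof (cases "v1 = 0")
      case True
      then have "v2 \<noteq> 0" using v(2) z by (simp add: nz_tuple)
      then have "P = ptB" using v(1) z True by (simp add: pt_tuple_eq) (rule exI[of _ "1/v2"], simp)
      then show ?thesis by simp
    next
      case False
      then have "P = ptC (v2/v1)" using v(1) z by (simp add: ptC_def pt_tuple_eq) (rule exI[of _ "1/v1"], simp)
      then show ?thesis by simp
    qed
  qed
next
  show "insert ptB (range (ptC :: 'a::field \<Rightarrow> _)) \<subseteq> l0"
    unfolding l0_def by (auto simp: ptC_def osc_inf_def osc_vec in_plane_tuple nz_tuple)
qed


lemma nosc_formula:
  fixes P :: "'a::{field,finite} v4 set"
  assumes "P \<in> osc_inf"
  shows "n_osc P = Suc (card {t. P \<in> osc t})"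
proof -
  have e: "{H \<in> osc_planes. P \<in> H} = insert osc_inf (osc ` {t. P \<in> osc t})"
    using assms unfolding osc_planes_def by auto
  have "osc_inf \<notin> osc ` {t. P \<in> osc t}" using osc_inf_ne by auto
  moreover have "card (osc ` {t. P \<in> osc t}) = card {t. P \<in> osc t}"
    by (rule card_image) (rule inj_on_subset[OF osc_inj], simp)
  ultimately show ?thesis unfolding n_osc_def e by simp
qed

lemma nosc_ptC: assumes "(3::'a::{field,finite}) \<noteq> 0"
  shows "n_osc (ptC y) = (if y = (0::'a) then 2 else 3)"
proof -
  have e: "{t. ptC y \<in> osc t} = {0, y}" using ptC_osc[OF assms] by auto
  have "n_osc (ptC y) = Suc (card {t. ptC y \<in> osc t})" by (rule nosc_formula[OF ptC_osc_inf])
  then show ?thesis unfolding e by simp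
qed

lemma nosc_ptB: assumes "(3::'a::{field,finite}) \<noteq> 0"
  shows "n_osc (ptB :: 'a v4 set) = 2"
proof -
  have e: "{t. (ptB :: 'a v4 set) \<in> osc t} = {0}" using ptB_osc[OF assms] by auto
  have "n_osc (ptB :: 'a v4 set) = Suc (card {t. (ptB :: 'a v4 set) \<in> osc t})" by (rule nosc_formula[OF ptB_osc_inf])
  then show ?thesis unfolding e by simp
qed

lemma ptC_tangent: assumes three: "(3::'a::field) \<noteq> 0" and y: "y \<noteq> (0::'a)" shows "ptC y \<notin> tangent t"
proof
  assume "ptC y \<in> tangent t"
  then obtain a b where ab: "(a,b) \<noteq> (0,0)" "ptC y = pt (vadd (sc a (1,t,t^2,t^3)) (sc b (0,1,2*t,3*t^2)))"
    unfolding tangent_def join_def by blast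
  then obtain c where c: "c \<noteq> 0" "a = c*0" "a*t+b = c*1" "a*t^2 + b*(2*t) = c*y" "a*t^3 + b*(3*t^2) = c*0"
    unfolding ptC_def by (auto simp: pt_tuple_eq sc_tuple vadd_tuple)
  then have "a = 0" "b = c" by simp_all
  then have "c*(3*t^2) = 0" "c*(2*t) = c*y" using c by simp_all
  then have "t = 0" "2*t = y" using c three by simp_all
  then show False using y by simp
qed

lemma ptC_tangent_inf: "ptC y \<notin> tangent_inf"
proof
  assume "ptC y \<in> tangent_inf"
  then obtain a b where ab: "(a,b) \<noteq> (0,0)" "ptC y = pt (vadd (sc a (0,0,0,1)) (sc b (0,0,1,0)))"
    unfolding tangent_inf_def join_def by blast
  then show False unfolding ptC_def by (auto simp: pt_tuple_eq sc_tuple vadd_tuple)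
qed

lemma ptA_tangent: "ptA \<in> tangent (0::'a::field)"
proof -
  have "ptA = pt (vadd (sc 0 (1,0,0^2,0^3)) (sc 1 (0,1,2*0,3*0^2)) :: 'a v4)"
    by (simp add: sc_tuple vadd_tuple)
  then show ?thesis unfolding tangent_def join_def by (intro CollectI exI[of _ 0] exI[of _ 1]) simp
qed

lemma ptB_tangent_inf: "ptB \<in> (tangent_inf :: 'a::field v4 set set)"
proof -
  have "ptB = pt (vadd (sc 0 (0,0,0,1)) (sc 1 (0,0,1,0)) :: 'a v4)"
    by (simp add: sc_tuple vadd_tuple)
  then show ?thesis unfolding tangent_inf_def join_def by (intro CollectI exI[of _ 0] exI[of _ 1]) simp
qed

lemma l0_PC1: "l0 \<inter> PC1 = {}" unfolding PC1_def using l0_curve .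

lemma l0_pts: "P \<in> (l0 :: 'a::field v4 set set) \<Longrightarrow> P \<in> points \<and> P \<notin> curve"
  using l0_points l0_curve by blast

lemma ptB_l0: "ptB \<in> l0" and ptC_l0: "ptC y \<in> l0" by (simp_all add: l0_eq)

lemma l0_PC2: assumes "(3::'a::{field,finite}) \<noteq> 0" shows "l0 \<inter> PC2 = {ptA, (ptB :: 'a v4 set)}"
proof
  show "l0 \<inter> PC2 \<subseteq> {ptA, (ptB :: 'a v4 set)}"
  proof
    fix P :: "'a v4 set" assume P: "P \<in> l0 \<inter> PC2"
    then obtain L where L: "L \<in> tangents" "P \<in> L" unfolding PC2_def by blast
    show "P \<in> {ptA, ptB}"
    proof (cases "P = ptB")
      case False
      then obtain y where y: "P = ptC y" using P unfolding l0_eq by blast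
      have "y = 0"
      proof (rule ccontr)
        assume "y \<noteq> 0"
        then show False using L y ptC_tangent[OF assms] ptC_tangent_inf unfolding tangents_def by blast
      qed
      then show ?thesis using y by (simp add: ptC0)
    qed simp
  qed
next
  have "ptA \<in> (l0 :: 'a v4 set set)" using ptC_l0[of "0::'a"] by (simp add: ptC0)
  then have "ptA \<in> (PC2 :: 'a v4 set set)" unfolding PC2_def tangents_def using l0_pts ptA_tangent[where 'a='a] by blast
  moreover have "ptB \<in> (PC2 :: 'a v4 set set)" unfolding PC2_def tangents_def using l0_pts[OF ptB_l0] ptB_tangent_inf[where 'a='a] by blast
  ultimately show "{ptA, (ptB :: 'a v4 set)} \<subseteq> l0 \<inter> PC2" using ptB_l0[where 'a='a] \<open>ptA \<in> l0\<close> by blast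
qed

lemma l0_PC3: assumes "(3::'a::{field,finite}) \<noteq> 0" shows "l0 \<inter> PC3 = ptC ` (UNIV - {0::'a})"
proof
  show "l0 \<inter> PC3 \<subseteq> ptC ` (UNIV - {0::'a})"
  proof
    fix P :: "'a v4 set" assume P: "P \<in> l0 \<inter> PC3"
    then have n: "n_osc P = 3" unfolding PC3_def by blast
    have "P \<noteq> ptB" using n nosc_ptB[OF assms] by auto
    then obtain y where y: "P = ptC y" using P unfolding l0_eq by blast
    then have "y \<noteq> 0" using n nosc_ptC[OF assms] by auto
    then show "P \<in> ptC ` (UNIV - {0})" using y by blast
  qed
next
  show "ptC ` (UNIV - {0::'a}) \<subseteq> l0 \<inter> PC3"
  proof
    fix P assume "P \<in> ptC ` (UNIV - {0::'a})"
    then obtain y where y: "y \<noteq> 0" "P = ptC y" by blast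
    then show "P \<in> l0 \<inter> PC3" unfolding PC3_def using ptC_l0 l0_pts[OF ptC_l0] nosc_ptC[OF assms] by auto
  qed
qed

lemma l0_nosc: assumes "(3::'a::{field,finite}) \<noteq> 0" and "P \<in> (l0 :: 'a v4 set set)" shows "n_osc P \<ge> 2"
  using assms(2) nosc_ptB[OF assms(1)] nosc_ptC[OF assms(1)] unfolding l0_eq by auto

lemma l0_PC4: assumes "(3::'a::{field,finite}) \<noteq> 0" shows "l0 \<inter> (PC4 :: 'a v4 set set) = {}"
  unfolding PC4_def using l0_nosc[OF assms] by fastforce
lemma l0_PC5: assumes "(3::'a::{field,finite}) \<noteq> 0" shows "l0 \<inter> (PC5 :: 'a v4 set set) = {}"
  unfolding PC5_def using l0_nosc[OF assms] by fastforce

lemma OD0_l0: assumes "(3::'a::{field,finite}) \<noteq> 0"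
  shows "OD0 (l0 :: 'a v4 set set) = [0, 2, card (UNIV::'a set) - 1, 0, 0]"
proof -
  have c3: "card (ptC ` (UNIV - {0::'a})) = card (UNIV::'a set) - 1"
    by (subst card_image) (auto intro: inj_on_subset[OF ptC_inj] simp: card_Diff_singleton)
  have c2: "card {ptA, (ptB :: 'a v4 set)} = 2" using ptA_ne_ptB[where 'a='a] by simp
  show ?thesis unfolding OD0_def
    using l0_PC1 l0_PC2[OF assms] l0_PC3[OF assms] l0_PC4[OF assms] l0_PC5[OF assms] c2 c3
    by (simp add: Int_commute)
qed


lemma cr_card_not2: assumes "(2::'a::{field,finite}) \<noteq> 0" "(3::'a) \<noteq> 0"
  shows "card (cr (c::'a)) \<noteq> 2"
proof (cases "c = 0")
  case True then show ?thesis by (simp add: cr_zero)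
next
  case False
  then show ?thesis using card_cr_cases[OF False] card_cr1[OF assms] by auto
qed

lemma I_all: assumes two: "(2::'a::{field,finite}) \<noteq> 0" and three: "(3::'a) \<noteq> 0"
  and d: "\<not> 3 dvd (card (UNIV::'a set) - 1)" and c: "c \<noteq> (0::'a)"
  shows "card (cr c) = 1"
proof -
  define I where "I = {c::'a. c \<noteq> 0 \<and> cr c \<noteq> {}}"
  have k: "card (cr (1::'a)) = 1" by (rule card_cr1_ndvd[OF two three d])
  have "card (UNIV - {0::'a}) = card I" using fiber_count[where 'a='a] k unfolding I_def by simp
  moreover have "I \<subseteq> UNIV - {0}" unfolding I_def by auto
  ultimately have "I = UNIV - {0}" by (intro card_subset_eq) auto
  then have "cr c \<noteq> {}" using c unfolding I_def by auto
  then show ?thesis using card_cr_cases[OF c] k by simp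
qed

lemma case5_all: assumes two: "(2::'a::{field,finite}) \<noteq> 0" and three: "(3::'a) \<noteq> 0"
  and q: "card (UNIV::'a set) mod 6 = 5"
  shows "card (cr (c::'a)) = 1"
proof (cases "c = 0")
  case True then show ?thesis by (simp add: cr_zero)
next
  case False
  have "\<not> 3 dvd (card (UNIV::'a set) - 1)" using q by presburger
  then show ?thesis using I_all[OF two three _ False] by simp
qed

lemma case1_counts: assumes two: "(2::'a::{field,finite}) \<noteq> 0" and three: "(3::'a) \<noteq> 0"
  and q: "card (UNIV::'a set) mod 6 = 1"
  shows "card {c::'a. card (cr c) = 3} = (card (UNIV::'a set) - 1) div 3"
    and "card {c::'a. cr c = {}} = 2 * (card (UNIV::'a set) - 1) div 3"
    and "\<And>c::'a. c \<noteq> 0 \<Longrightarrow> card (cr c) \<noteq> 1"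
proof -
  define q where "q = card (UNIV::'a set)"
  define I where "I = {c::'a. c \<noteq> 0 \<and> cr c \<noteq> {}}"
  have d: "3 dvd (q - 1)" using q unfolding q_def by presburger
  have k: "card (cr (1::'a)) = 3" by (rule card_cr1_dvd[OF two three d[unfolded q_def]])
  have fc: "q - 1 = 3 * card I" using fiber_count[where 'a='a] k card_units[where 'a='a] unfolding I_def q_def by simp
  have e3: "{c::'a. card (cr c) = 3} = I"
  proof
    show "{c::'a. card (cr c) = 3} \<subseteq> I"
    proof
      fix c :: 'a assume "c \<in> {c. card (cr c) = 3}"
      then have c3: "card (cr c) = 3" by simp
      then have "c \<noteq> 0" by (auto simp: cr_zero)
      moreover have "cr c \<noteq> {}" using c3 by auto
      ultimately show "c \<in> I" unfolding I_def by simp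
    qed
  next
    show "I \<subseteq> {c::'a. card (cr c) = 3}" unfolding I_def using card_cr_cases[where 'a='a] k by auto
  qed
  show "card {c::'a. card (cr c) = 3} = (card (UNIV::'a set) - 1) div 3"
    unfolding e3 q_def[symmetric] fc by simp
  have e0: "{c::'a. cr c = {}} = (UNIV - {0}) - I"
    unfolding I_def by (auto simp: cr_zero)
  have "card ((UNIV - {0::'a}) - I) = card (UNIV - {0::'a}) - card I"
    by (rule card_Diff_subset) (auto simp: I_def)
  also have "\<dots> = (q - 1) - card I" using card_units[where 'a='a] unfolding q_def by simp
  finally show "card {c::'a. cr c = {}} = 2 * (card (UNIV::'a set) - 1) div 3"
    unfolding e0 q_def[symmetric] fc by simp
  show "c \<noteq> 0 \<Longrightarrow> card (cr c) \<noteq> 1" for c :: 'a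
    using card_cr_cases[of c] k by auto
qed


lemma Ep_planes: "Ep a \<in> planes" unfolding Ep_def planes_def by (force simp: zero4_tuple)

lemma l0_Ep: "l0 \<subseteq> Ep (a::'a::field)"
  unfolding l0_eq Ep_def by (auto simp: ptC_def in_plane_tuple nz_tuple)

lemma l0_osc_inf: "l0 \<subseteq> osc_inf" unfolding l0_def by blast

lemma Ep0: "Ep 0 = osc (0::'a::field)" by (simp add: Ep_def osc_vec)

lemma planes_l0: "{H \<in> planes. l0 \<subseteq> H} = insert osc_inf (range (Ep :: 'a::field \<Rightarrow> _))"
proof
  show "{H \<in> planes. l0 \<subseteq> H} \<subseteq> insert osc_inf (range (Ep :: 'a::field \<Rightarrow> _))"
  proof
    fix H :: "'a v4 set set" assume H: "H \<in> {H \<in> planes. l0 \<subseteq> H}"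
    then obtain u where u: "H = plane u" "u \<noteq> zero4" unfolding planes_def by blast
    obtain u0 u1 u2 u3 where uu: "u = (u0,u1,u2,u3)" by (cases u rule: prod_cases4)
    have "ptB \<in> H" "ptC 0 \<in> H" using H ptB_l0 ptC_l0 by blast+
    then have z: "u2 = 0" "u1 = 0" using u uu by (simp_all add: ptC_def in_plane_tuple nz_tuple)
    show "H \<in> insert osc_inf (range Ep)"
    proof (cases "u3 = 0")
      case True
      then have "u0 \<noteq> 0" using u(2) uu z by (simp add: nz_tuple)
      have "u = sc u0 (1,0,0,0)" using uu z True by (simp add: sc_tuple)
      then have "H = osc_inf" using \<open>u0 \<noteq> 0\<close> u(1) by (simp add: plane_sc osc_inf_def)
      then show ?thesis by simp
    next
      case False
      have "u = sc u3 (u0/u3,0,0,1)" using uu z False by (simp add: sc_tuple)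
      then have "H = Ep (u0/u3)" using u False by (simp add: plane_sc Ep_def)
      then show ?thesis by simp
    qed
  qed
next
  show "insert osc_inf (range (Ep :: 'a::field \<Rightarrow> _)) \<subseteq> {H \<in> planes. l0 \<subseteq> H}"
    using Ep_planes l0_Ep l0_osc_inf osc_sub_planes osc_inf_in by blast
qed

lemma Pc_Ep: "Pc t \<in> Ep a \<longleftrightarrow> t \<in> cr (-(a::'a::field))"
  by (auto simp: Pc_def Ep_def cr_def in_plane_tuple nz_tuple eq_neg_iff_add_eq_0 add.commute)
lemma Pinf_Ep: "Pinf \<notin> Ep (a::'a::field)"
  by (simp add: Pinf_def Ep_def in_plane_tuple nz_tuple)

lemma Ep_curve: "Ep a \<inter> curve = Pc ` cr (-(a::'a::field))"
  unfolding curve_def using Pc_Ep Pinf_Ep by auto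

lemma card_Ep_curve: "card (Ep a \<inter> curve) = card (cr (-(a::'a::field)))"
  unfolding Ep_curve by (rule card_image) (rule inj_on_subset[OF Pc_inj], simp)

lemma osc_inf_curve: "osc_inf \<inter> curve = {Pinf}"
  unfolding curve_def using Pc_osc_inf Pinf_osc_inf by auto

lemma Ep_osc: assumes three: "(3::'a::field) \<noteq> 0" shows "Ep a \<in> osc_planes \<longleftrightarrow> a = (0::'a)"
proof
  assume "a = 0" then show "Ep a \<in> osc_planes" by (simp add: Ep0 osc_in)
next
  assume E: "Ep a \<in> osc_planes"
  have "Ep a \<noteq> osc_inf" using Pinf_osc_inf Pinf_Ep by metis
  then obtain t where t: "Ep a = osc t" using E unfolding osc_planes_def by blast
  have "ptC 0 \<in> Ep a" using l0_Ep ptC_l0 by blast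
  then have "ptC 0 \<in> osc t" using t by simp
  then have "t = 0" using ptC_osc[OF three, of 0 t] by simp
  then have "Pc 0 \<in> Ep a" using t by (simp add: Pc_osc)
  then show "a = 0" by (simp add: Pc_Ep cr_def)
qed

lemma Ep_inj: "inj (Ep :: 'a::field \<Rightarrow> _)"
proof (rule injI)
  fix a b :: 'a assume "Ep a = Ep b"
  moreover have "pt (1,0,0,-a) \<in> Ep a" by (simp add: Ep_def in_plane_tuple nz_tuple)
  ultimately have "pt (1,0,0,-a) \<in> Ep b" by simp
  then show "a = b" by (simp add: Ep_def in_plane_tuple nz_tuple)
qed

lemma osc_inf_notEp: "osc_inf \<notin> range (Ep :: 'a::field \<Rightarrow> _)"
  using Pinf_osc_inf Pinf_Ep by fastforce

lemma cls_l0: assumes "D \<subseteq> planes"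
  shows "{H \<in> D. l0 \<subseteq> H} = D \<inter> insert osc_inf (range (Ep :: 'a::field \<Rightarrow> _))"
  using assms planes_l0[where 'a='a] by blast

lemma card_Ep_img: "card (Ep ` S) = card (S :: 'a::field set)"
  by (rule card_image) (rule inj_on_subset[OF Ep_inj], simp)

lemma card_neg: "card {a::'a::{field,finite}. P (-a)} = card {c. P c}"
proof -
  have "uminus ` {a::'a. P (-a)} = {c. P c}"
  proof
    show "uminus ` {a::'a. P (-a)} \<subseteq> {c. P c}" by auto
    show "{c. P c} \<subseteq> uminus ` {a::'a. P (-a)}"
    proof
      fix c assume "c \<in> {c. P c}"
      then have "-c \<in> {a::'a. P (-a)}" by simp
      moreover have "c = - (-c)" by simp
      ultimately show "c \<in> uminus ` {a::'a. P (-a)}" by (rule rev_image_eqI)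
    qed
  qed
  moreover have "inj_on uminus {a::'a. P (-a)}" by (auto intro: inj_onI)
  ultimately show ?thesis using card_image by metis
qed


lemma HC_sub: "HC1 \<subseteq> planes" "HC2 \<subseteq> planes" "HC3 \<subseteq> planes" "HC4 \<subseteq> planes" "HC5 \<subseteq> planes"
  unfolding HC1_def HC2_def HC3_def HC4_def HC5_def using osc_sub_planes by auto

lemma OD2_l0: assumes three: "(3::'a::{field,finite}) \<noteq> 0" and two: "(2::'a) \<noteq> 0"
  shows "OD2 (l0 :: 'a v4 set set) = [2, 0, card {c::'a. card (cr c) = 3},
            card {a::'a. a \<noteq> 0 \<and> card (cr (-a)) = 1}, card {c::'a. cr c = {}}]"
proof -
  let ?S = "insert osc_inf (range (Ep :: 'a \<Rightarrow> _))"
  have e1: "HC1 \<inter> ?S = {osc_inf, Ep 0}" unfolding HC1_def using osc_inf_in Ep_osc[OF three] by auto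
  have "osc_inf \<noteq> Ep (0::'a)" using osc_inf_notEp[where 'a='a] by blast
  then have n1: "card {osc_inf, Ep (0::'a)} = 2" by simp
  have e2: "HC2 \<inter> ?S = {}" unfolding HC2_def using osc_inf_curve[where 'a='a] card_Ep_curve[where 'a='a]
      cr_card_not2[OF two three] by auto
  have oi: "(osc_inf :: 'a v4 set set) \<in> osc_planes" by (rule osc_inf_in)
  have e3: "HC3 \<inter> ?S = Ep ` {a. card (cr (-a)) = 3}" unfolding HC3_def
    using osc_inf_curve[where 'a='a] card_Ep_curve[where 'a='a] Ep_planes[where 'a='a] by auto
  have e4: "HC4 \<inter> ?S = Ep ` {a. a \<noteq> 0 \<and> card (cr (-a)) = 1}" unfolding HC4_def
    using oi card_Ep_curve[where 'a='a] Ep_planes[where 'a='a] Ep_osc[OF three] by auto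
  have Ee: "Ep a \<inter> curve = {} \<longleftrightarrow> cr (-a) = {}" for a :: 'a by (simp add: Ep_curve)
  have e5: "HC5 \<inter> ?S = Ep ` {a. cr (-a) = {}}" unfolding HC5_def
    using osc_inf_curve[where 'a='a] Ee Ep_planes[where 'a='a] by (auto simp del: Int_iff)
  have c3: "card {a::'a. card (cr (-a)) = 3} = card {c::'a. card (cr c) = 3}"
    by (rule card_neg[where P="\<lambda>c. card (cr c) = 3"])
  have c5: "card {a::'a. cr (-a) = {}} = card {c::'a. cr c = {}}"
    by (rule card_neg[where P="\<lambda>c. cr c = {}"])
  have s: "(HC1::'a v4 set set set) \<subseteq> planes" "(HC2::'a v4 set set set) \<subseteq> planes"
    "(HC3::'a v4 set set set) \<subseteq> planes" "(HC4::'a v4 set set set) \<subseteq> planes" "(HC5::'a v4 set set set) \<subseteq> planes"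
    by (rule HC_sub)+
  show ?thesis unfolding OD2_def
    using cls_l0[OF s(1)] cls_l0[OF s(2)] cls_l0[OF s(3)] cls_l0[OF s(4)] cls_l0[OF s(5)]
      e1 e2 e3 e4 e5 n1 c3 c5 by (simp add: card_Ep_img)
qed


theorem mainTheorem1:
  fixes q :: nat
  assumes "q = card (UNIV :: 'a set)"
    and "(2::'a::{field,finite}) \<noteq> 0" and "(3::'a) \<noteq> 0"
  shows "(\<forall>l \<in> (L1 :: 'a v4 set set set). l \<inter> curve = {})
    \<and> (\<exists>l0. (L1 :: 'a v4 set set set) = {line_act g l0 | g. g \<in> Gmaps})
    \<and> (\<forall>l \<in> (L1 :: 'a v4 set set set).
         (q mod 6 = 5 \<longrightarrow> OD2 l = [2, 0, 0, q - 1, 0] \<and> OD0 l = [0, 2, q - 1, 0, 0])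
       \<and> (q mod 6 = 1 \<longrightarrow> OD2 l = [2, 0, (q - 1) div 3, 0, 2 * (q - 1) div 3]
                              \<and> OD0 l = [0, 2, q - 1, 0, 0]))"
proof -
  note qd = assms(1)
  have two: "(2::'a) \<noteq> 0" and three: "(3::'a) \<noteq> 0" using assms by auto
  have lp: "(l0 :: 'a v4 set set) \<subseteq> points" by (rule l0_points)
  have lc: "(l0 :: 'a v4 set set) \<inter> curve = {}" by (rule l0_curve)
  have part1: "\<forall>l \<in> (L1 :: 'a v4 set set set). l \<inter> curve = {}"
  proof
    fix l :: "'a v4 set set" assume "l \<in> L1"
    then obtain g where g: "g \<in> Gmaps" "l = line_act g l0" using sub_orbit by blast
    show "l \<inter> curve = {}" using la_curve_empty[OF g(1) lp lc] g(2) by simp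
  qed
  have part2: "\<exists>l0. (L1 :: 'a v4 set set set) = {line_act g l0 | g. g \<in> Gmaps}"
    using L1_orbit[where 'a='a] by blast
  have od: "OD2 l = OD2 (l0::'a v4 set set) \<and> OD0 l = OD0 (l0 :: 'a v4 set set)"
    if lL: "l \<in> (L1::'a v4 set set set)" for l
  proof -
    obtain g where g: "g \<in> Gmaps" "l = line_act g l0" using sub_orbit[OF lL] by blast
    show ?thesis using OD_inv[OF three g(1) lp] g(2) by simp
  qed
  have o0: "OD0 (l0 :: 'a v4 set set) = [0, 2, q - 1, 0, 0]" using OD0_l0[OF three] qd by simp
  have o2: "OD2 (l0 :: 'a v4 set set) = [2, 0, card {c::'a. card (cr c) = 3},
            card {a::'a. a \<noteq> 0 \<and> card (cr (-a)) = 1}, card {c::'a. cr c = {}}]"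
    by (rule OD2_l0[OF three two])
  have c5: "OD2 (l0::'a v4 set set) = [2, 0, 0, q - 1, 0]" if q5: "q mod 6 = 5"
  proof -
    have all: "card (cr c) = 1" for c :: 'a using case5_all[OF two three] q5 qd by simp
    have a: "{c::'a. card (cr c) = 3} = {}" using all by simp
    have b: "{a::'a. a \<noteq> 0 \<and> card (cr (-a)) = 1} = UNIV - {0}" using all by auto
    have c: "{c::'a. cr c = {}} = {}"
    proof -
      have "cr c \<noteq> {}" for c :: 'a using all[of c] by auto
      then show ?thesis by simp
    qed
    show ?thesis unfolding o2 a b c using card_units[where 'a='a] qd by simp
  qed
  have c1: "OD2 (l0::'a v4 set set) = [2, 0, (q - 1) div 3, 0, 2 * (q - 1) div 3]" if q1: "q mod 6 = 1"
  proof -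
    have q1': "card (UNIV::'a set) mod 6 = 1" using q1 qd by simp
    have b: "{a::'a. a \<noteq> 0 \<and> card (cr (-a)) = 1} = {}"
      using case1_counts(3)[OF two three q1'] by auto
    show ?thesis unfolding o2 b using case1_counts(1,2)[OF two three q1'] qd by simp
  qed
  show ?thesis using part1 part2 od o0 c5 c1 by simp
qed


end
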